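(* Let $(\mathbb X,\|\cdot\|)$ be a uniformly smooth Banach space over $\mathbb K$, $\mathcal D=\{\phi_i\}_{i\in\mathcal I}$ a dictionary in $\mathbb X$, $\tau\in(0,1]$, and $(\mathcal G_n)_{n\ge1}$ a $\tau$-WCGA associated with $(\mathbb X,\|\cdot\|,\mathcal D)$. Let $D>N\ge1$ be integers, let $k_N>0$, let $Q:[0,\infty)\to[0,\infty)$ be increasing, positive on $(0,\infty)$ with $Q(0)=0$, and let $(H(n))_{n\ge1}$ be a positive increasing sequence, such that: (i) $(\mathbb X,\|\cdot\|,\mathcal D)$ satisfies property $\mathcal D(Q)$; (ii) $\Sigma_N(\mathcal D)$ satisfies property $A_1(k_N,D)$; (iii) $\Sigma_N(\mathcal D)$ satisfies property $A_3(H,D)$. Let $\lambda_1>1$ and assume that the sequence $$G(n)=\Big[Q\Big(\frac{c(\tau)}{H(n)}\Big)\Big]^{-1},\qquad c(\tau)=\frac\tau2\Big(1-\frac1{\sqrt{\lambda_1}}\Big),\qquad n\ge1,$$ is 1-quasi-convex. Define $$\varphi(N):=8\,\ln\Big[\frac{8(1+\lambda_1)k_N}{\sqrt{\lambda_1}-1}\Big]\,G(2N).$$ If $N+\varphi(N)<D$, then $$\big\|x-\mathcal G_{\lfloor\varphi(N)\rfloor}(x)\big\|\le\lambda_1\,\|x-\Phi\|\qquad\text{for all }x\in\mathbb X,\ \Phi\in\Sigma_N(\mathcal D).$$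
   Context: $\mathbb K=\mathbb R$ or $\mathbb C$. For $f\in\mathbb X\setminus\{0\}$, $F_f\in\mathbb X^*$ denotes the (unique, by smoothness) norming functional: $\|F_f\|_{\mathbb X^*}=1$, $F_f(f)=\|f\|$. A dictionary is a family $\mathcal D=\{\phi_i\}_{i\in\mathcal I}$ of nonzero vectors whose closed linear span is $\mathbb X$. $\Sigma_N(\mathcal D)$ is the set of all linear combinations of at most $N$ elements of $\mathcal D$; $[\,\cdot\,]$ denotes linear span; $\sigma_N(f)=\mathrm{dist}(f,\Sigma_N(\mathcal D))$. $\tau$-WCGA: maps $\mathcal G_n:\mathbb X\to\Sigma_n(\mathcal D)$ defined as follows. For $f\ne0$ set $f_0=f$; at step $n+1$ choose any $\phi_{i_{n+1}}\in\mathcal D$ with $|F_{f_n}(\phi_{i_{n+1}})|\ge\tau\sup_{\phi\in\mathcal D}|F_{f_n}(\phi)|$, let $\mathcal G_{n+1}(f)$ be any element of $[\phi_{i_1},\dots,\phi_{i_{n+1}}]$ with $\|f-\mathcal G_{n+1}(f)\|=\mathrm{dist}(f,[\phi_{i_1},\dots,\phi_{i_{n+1}}])$, and set $f_{n+1}=f-\mathcal G_{n+1}(f)$. If $f_n=0$ at some stage, set $\mathcal G_{n+k}(f)=f$ for all $k\ge1$ (and $\mathcal G_n(0)=0$). Property $\mathcal D(Q)$: $\mathrm{dist}(f,[\phi])\le\|f\|\,(1-Q(|F_f(\phi)|))$ for all $\phi\in\mathcal D$, $f\in\mathbb X\setminus\{0\}$. Property $A_1(k_N,D)$ of $\Sigma_N$: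 $\|\sum_{j\in A}a_j\phi_j\|\le k_N\|\sum_{j\in B}a_j\phi_j\|$ for all scalars $a_j$ and all finite $A\subset B\subset\mathcal I$ with $|A|\le N$, $|B|<D$. $A_1(k_N)$ means this holds for all $D<\infty$. Property $A_3(H,D)$ of $\Sigma_N$: $\sum_{j\in A}|a_j|\le H(|A|)\,\|\sum_{j\in B}a_j\phi_j\|$ for all scalars $a_j$ and all finite $A\subset B\subset\mathcal I$ with $|A|\le N$, $|B|<D$. $A_3(H)$ means this holds for all $D<\infty$. A positive sequence $(G(k))_{k\ge1}$ is 1-quasi-convex if $G(k)/k\le G(k+1)/(k+1)$ for all $k\in\mathbb N$. *)

theory Defs
  imports "HOL-Analysis.Analysis"
begin

text \<open>Scalars: the field K is represented by a type 'k of class real_normed_field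
(instantiated to real or complex), acting on the real Banach space 'a through an
explicit scalar multiplication sm, which must extend the real scaling and be
norm-homogeneous.  For K = R we take sm = scaleR.\<close>

definition normed_space_over :: "('k::real_normed_field \<Rightarrow> 'a::real_normed_vector \<Rightarrow> 'a) \<Rightarrow> bool" where
  "normed_space_over sm \<longleftrightarrow>
     (\<forall>c x y. sm c (x + y) = sm c x + sm c y) \<and>
     (\<forall>c d x. sm (c + d) x = sm c x + sm d x) \<and>
     (\<forall>c d x. sm (c * d) x = sm c (sm d x)) \<and>
     (\<forall>x. sm 1 x = x) \<and>
     (\<forall>r x. sm (of_real r) x = scaleR r x) \<and>
     (\<forall>c x. norm (sm c x) = norm c * norm x)"

definition kspan :: "('k::real_normed_field \<Rightarrow> 'a::real_normed_vector \<Rightarrow> 'a) \<Rightarrow> 'a set \<Rightarrow> 'a set" where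
  "kspan sm S = {x. \<exists>A c. finite A \<and> A \<subseteq> S \<and> x = (\<Sum>v\<in>A. sm (c v) v)}"

definition kfunctional :: "('k::real_normed_field \<Rightarrow> 'a::real_normed_vector \<Rightarrow> 'a) \<Rightarrow> ('a \<Rightarrow> 'k) \<Rightarrow> bool" where
  "kfunctional sm F \<longleftrightarrow>
     (\<forall>x y. F (x + y) = F x + F y) \<and> (\<forall>c x. F (sm c x) = c * F x) \<and>
     (\<exists>B. \<forall>x. norm (F x) \<le> B * norm x)"

definition dual_norm :: "('a::real_normed_vector \<Rightarrow> 'k::real_normed_field) \<Rightarrow> real" where
  "dual_norm F = (SUP x\<in>{x. norm x \<le> 1}. norm (F x))"

definition norming :: "('k::real_normed_field \<Rightarrow> 'a::real_normed_vector \<Rightarrow> 'a) \<Rightarrow> 'a \<Rightarrow> ('a \<Rightarrow> 'k) \<Rightarrow> bool" where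
  "norming sm f F \<longleftrightarrow> kfunctional sm F \<and> dual_norm F = 1 \<and> F f = of_real (norm f)"

definition modulus_smoothness :: "'a::real_normed_vector itself \<Rightarrow> real \<Rightarrow> real" where
  "modulus_smoothness (t::'a itself) u =
     (SUP p\<in>{(x::'a, y::'a). norm x = 1 \<and> norm y = 1}.
        (norm (fst p + u *\<^sub>R snd p) + norm (fst p - u *\<^sub>R snd p)) / 2 - 1)"

definition uniformly_smooth :: "'a::real_normed_vector itself \<Rightarrow> bool" where
  "uniformly_smooth (t::'a itself) \<longleftrightarrow>
     ((\<lambda>u. modulus_smoothness t u / u) \<longlongrightarrow> 0) (at_right 0)"

definition dictionary :: "('k::real_normed_field \<Rightarrow> 'a::real_normed_vector \<Rightarrow> 'a) \<Rightarrow> ('i \<Rightarrow> 'a) \<Rightarrow> bool" where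
  "dictionary sm \<phi> \<longleftrightarrow> (\<forall>i. \<phi> i \<noteq> 0) \<and> closure (kspan sm (range \<phi>)) = UNIV"

definition SigmaN :: "('k::real_normed_field \<Rightarrow> 'a::real_normed_vector \<Rightarrow> 'a) \<Rightarrow> ('i \<Rightarrow> 'a) \<Rightarrow> nat \<Rightarrow> 'a set" where
  "SigmaN sm \<phi> N = {x. \<exists>A c. finite A \<and> card A \<le> N \<and> x = (\<Sum>i\<in>A. sm (c i) (\<phi> i))}"

text \<open>tau-WCGA: G n f is the n-th approximant (G 0 f = 0, so f_0 = f).  For every f there
is a sequence of chosen indices ix 1, ix 2, ... realising the algorithm.  The weak greedy
condition |F(phi_{i_{n+1}})| >= tau sup_phi |F(phi)| is written out pointwise (equivalent,
also when the supremum is infinite).\<close>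
definition wcga :: "('k::real_normed_field \<Rightarrow> 'a::real_normed_vector \<Rightarrow> 'a) \<Rightarrow> ('i \<Rightarrow> 'a) \<Rightarrow> real \<Rightarrow> (nat \<Rightarrow> 'a \<Rightarrow> 'a) \<Rightarrow> bool" where
  "wcga sm \<phi> \<tau> G \<longleftrightarrow>
     (\<forall>f. G 0 f = 0 \<and>
       (\<exists>ix :: nat \<Rightarrow> 'i. \<forall>n.
          (f - G n f = 0 \<longrightarrow> G (Suc n) f = f) \<and>
          (f - G n f \<noteq> 0 \<longrightarrow>
             (\<forall>F. norming sm (f - G n f) F \<longrightarrow>
                (\<forall>j. \<tau> * norm (F (\<phi> j)) \<le> norm (F (\<phi> (ix (Suc n)))))) \<and>
             G (Suc n) f \<in> kspan sm ((\<lambda>k. \<phi> (ix k)) ` {1..Suc n}) \<and>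
             norm (f - G (Suc n) f) = infdist f (kspan sm ((\<lambda>k. \<phi> (ix k)) ` {1..Suc n})))))"

definition property_DQ :: "('k::real_normed_field \<Rightarrow> 'a::real_normed_vector \<Rightarrow> 'a) \<Rightarrow> ('i \<Rightarrow> 'a) \<Rightarrow> (real \<Rightarrow> real) \<Rightarrow> bool" where
  "property_DQ sm \<phi> Q \<longleftrightarrow>
     (\<forall>i f F. f \<noteq> 0 \<longrightarrow> norming sm f F \<longrightarrow>
        infdist f (kspan sm {\<phi> i}) \<le> norm f * (1 - Q (norm (F (\<phi> i)))))"

definition property_A1 :: "('k::real_normed_field \<Rightarrow> 'a::real_normed_vector \<Rightarrow> 'a) \<Rightarrow> ('i \<Rightarrow> 'a) \<Rightarrow> nat \<Rightarrow> real \<Rightarrow> nat \<Rightarrow> bool" where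
  "property_A1 sm \<phi> N k D \<longleftrightarrow>
     (\<forall>(a::'i \<Rightarrow> 'k) A B. finite B \<and> A \<subseteq> B \<and> card A \<le> N \<and> card B < D \<longrightarrow>
        norm (\<Sum>j\<in>A. sm (a j) (\<phi> j)) \<le> k * norm (\<Sum>j\<in>B. sm (a j) (\<phi> j)))"

text \<open>Property A_3(H, D) of Sigma_N (A nonempty; the empty case is trivial).\<close>
definition property_A3 :: "('k::real_normed_field \<Rightarrow> 'a::real_normed_vector \<Rightarrow> 'a) \<Rightarrow> ('i \<Rightarrow> 'a) \<Rightarrow> nat \<Rightarrow> (nat \<Rightarrow> real) \<Rightarrow> nat \<Rightarrow> bool" where
  "property_A3 sm \<phi> N H D \<longleftrightarrow>
     (\<forall>(a::'i \<Rightarrow> 'k) A B. finite B \<and> A \<subseteq> B \<and> A \<noteq> {} \<and> card A \<le> N \<and> card B < D \<longrightarrow>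
        (\<Sum>j\<in>A. norm (a j)) \<le> H (card A) * norm (\<Sum>j\<in>B. sm (a j) (\<phi> j)))"

definition quasi_convex1 :: "(nat \<Rightarrow> real) \<Rightarrow> bool" where
  "quasi_convex1 G \<longleftrightarrow> (\<forall>k\<ge>1. G k / real k \<le> G (k + 1) / real (k + 1))"

end

theory Submission
  imports Defs
begin

lemma nso_ofreal: "normed_space_over sm \<Longrightarrow> sm (of_real r) x = r *\<^sub>R x"
  by (simp add: normed_space_over_def)
lemma nso_add_left: "normed_space_over sm \<Longrightarrow> sm (c + d) x = sm c x + sm d x"
  by (simp add: normed_space_over_def)
lemma nso_add_right: "normed_space_over sm \<Longrightarrow> sm c (x + y) = sm c x + sm c y"
  by (simp add: normed_space_over_def)
lemma nso_mult: "normed_space_over sm \<Longrightarrow> sm (c * d) x = sm c (sm d x)"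
  by (simp add: normed_space_over_def)
lemma nso_one: "normed_space_over sm \<Longrightarrow> sm 1 x = x"
  by (simp add: normed_space_over_def)
lemma nso_norm: "normed_space_over sm \<Longrightarrow> norm (sm c x) = norm c * norm x"
  by (simp add: normed_space_over_def)
lemma nso_zero_left: "normed_space_over sm \<Longrightarrow> sm 0 x = 0"
  using nso_ofreal[of sm 0 x] by simp
lemma nso_zero_right: assumes "normed_space_over sm" shows "sm c 0 = 0"
proof -
  have "sm c (0 + 0) = sm c 0 + sm c 0" using nso_add_right[OF assms] .
  then show ?thesis by simp
qed
lemma nso_diff_left: assumes "normed_space_over sm" shows "sm (c - d) x = sm c x - sm d x"
proof -
  have "sm ((c - d) + d) x = sm (c - d) x + sm d x" using nso_add_left[OF assms] .
  then show ?thesis by simp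
qed
lemma nso_minus_left: assumes "normed_space_over sm" shows "sm (- c) x = - sm c x"
  using nso_diff_left[OF assms, of 0 c x] nso_zero_left[OF assms] by simp
lemma nso_diff_right: assumes "normed_space_over sm" shows "sm c (x - y) = sm c x - sm c y"
proof -
  have "sm c ((x - y) + y) = sm c (x - y) + sm c y" using nso_add_right[OF assms] .
  then show ?thesis by simp
qed
lemma nso_minus_right: assumes "normed_space_over sm" shows "sm c (- y) = - sm c y"
  using nso_diff_right[OF assms, of c 0 y] nso_zero_right[OF assms] by simp
lemma nso_sum_right: assumes "normed_space_over sm" shows "sm c (sum g A) = (\<Sum>v\<in>A. sm c (g v))"
proof (induction A rule: infinite_finite_induct)
  case (infinite A) then show ?case by (simp add: nso_zero_right[OF assms])
next
  case empty then show ?case by (simp add: nso_zero_right[OF assms])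
next
  case (insert x F) then show ?case by (simp add: nso_add_right[OF assms])
qed

lemma nso_scaleR: "normed_space_over (scaleR :: real \<Rightarrow> 'a::real_normed_vector \<Rightarrow> 'a)"
  by (simp add: normed_space_over_def scaleR_add_right scaleR_add_left)


lemma kspan_I: "finite A \<Longrightarrow> A \<subseteq> S \<Longrightarrow> x = (\<Sum>v\<in>A. sm (c v) v) \<Longrightarrow> x \<in> kspan sm S"
  unfolding kspan_def by auto

lemma kspan_E:
  assumes "x \<in> kspan sm S"
  obtains A c where "finite A" "A \<subseteq> S" "x = (\<Sum>v\<in>A. sm (c v) v)"
  using assms unfolding kspan_def by auto

lemma kspan_zero: "0 \<in> kspan sm S"
  unfolding kspan_def by (rule CollectI, rule exI[of _ "{}"]) simp

lemma kspan_gen: "v \<in> S \<Longrightarrow> sm c v \<in> kspan sm S"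
  unfolding kspan_def by (rule CollectI, rule exI[of _ "{v}"], rule exI[of _ "\<lambda>_. c"]) simp

lemma kspan_mono: "S \<subseteq> S' \<Longrightarrow> kspan sm S \<subseteq> kspan sm S'"
  unfolding kspan_def by blast

lemma kspan_add:
  assumes nso: "normed_space_over sm" and x: "x \<in> kspan sm S" and y: "y \<in> kspan sm S"
  shows "x + y \<in> kspan sm S"
proof -
  obtain A c where A: "finite A" "A \<subseteq> S" "x = (\<Sum>v\<in>A. sm (c v) v)" using x by (rule kspan_E)
  obtain B d where B: "finite B" "B \<subseteq> S" "y = (\<Sum>v\<in>B. sm (d v) v)" using y by (rule kspan_E)
  define c' where "c' v = (if v \<in> A then c v else 0)" for v
  define d' where "d' v = (if v \<in> B then d v else 0)" for v
  have "x = (\<Sum>v\<in>A \<union> B. sm (c' v) v)"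
    unfolding A(3) by (rule sum.mono_neutral_cong_left) (use A B in \<open>auto simp: c'_def nso_zero_left[OF nso]\<close>)
  moreover have "y = (\<Sum>v\<in>A \<union> B. sm (d' v) v)"
    unfolding B(3) by (rule sum.mono_neutral_cong_left) (use A B in \<open>auto simp: d'_def nso_zero_left[OF nso]\<close>)
  ultimately have "x + y = (\<Sum>v\<in>A \<union> B. sm (c' v + d' v) v)"
    by (simp add: sum.distrib[symmetric] nso_add_left[OF nso])
  then show ?thesis using A B by (intro kspan_I[of "A \<union> B"]) auto
qed

lemma kspan_smul:
  assumes nso: "normed_space_over sm" and x: "x \<in> kspan sm S"
  shows "sm e x \<in> kspan sm S"
proof -
  obtain A c where A: "finite A" "A \<subseteq> S" "x = (\<Sum>v\<in>A. sm (c v) v)" using x by (rule kspan_E)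
  have "sm e x = (\<Sum>v\<in>A. sm e (sm (c v) v))"
    unfolding A(3) by (rule nso_sum_right[OF nso])
  also have "\<dots> = (\<Sum>v\<in>A. sm (e * c v) v)"
    by (rule sum.cong[OF refl]) (rule nso_mult[OF nso, symmetric])
  finally show ?thesis using A by (intro kspan_I[of A]) auto
qed

lemma kspan_neg:
  assumes nso: "normed_space_over sm" and x: "x \<in> kspan sm S" shows "- x \<in> kspan sm S"
proof -
  have "sm (-1) x = - x" using nso_minus_left[OF nso, of 1 x] nso_one[OF nso, of x] by simp
  then show ?thesis using kspan_smul[OF nso x, of "-1"] by simp
qed

lemma kspan_diff:
  assumes nso: "normed_space_over sm" and x: "x \<in> kspan sm S" and y: "y \<in> kspan sm S"
  shows "x - y \<in> kspan sm S"
  using kspan_add[OF nso x kspan_neg[OF nso y]] by simp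

lemma kspan_scaleR:
  assumes nso: "normed_space_over sm" and x: "x \<in> kspan sm S" shows "r *\<^sub>R x \<in> kspan sm S"
proof -
  have "sm (of_real r) x = r *\<^sub>R x" by (rule nso_ofreal[OF nso])
  then show ?thesis using kspan_smul[OF nso x, of "of_real r"] by simp
qed

lemma kspan_sum_idx:
  assumes nso: "normed_space_over sm" and fin: "finite A" and sub: "\<phi> ` A \<subseteq> S"
  shows "(\<Sum>i\<in>A. sm (c i) (\<phi> i)) \<in> kspan sm S"
  using fin sub
proof (induction A rule: finite_induct)
  case empty then show ?case by (simp add: kspan_zero)
next
  case (insert x F) then show ?case by (auto intro!: kspan_add[OF nso] kspan_gen)
qed

lemma kspan_rep_idx:
  assumes x: "x \<in> kspan sm (\<phi> ` B)"
  shows "\<exists>A c. finite A \<and> A \<subseteq> B \<and> x = (\<Sum>i\<in>A. sm (c i) (\<phi> i))"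
proof -
  obtain A c where A: "finite A" "A \<subseteq> \<phi> ` B" "x = (\<Sum>v\<in>A. sm (c v) v)" using x by (rule kspan_E)
  define g where "g = inv_into B \<phi>"
  have inj: "inj_on g A" unfolding g_def using A(2) by (metis inj_on_inv_into)
  have fg: "\<phi> (g v) = v" if "v \<in> A" for v unfolding g_def using A(2) that by (auto intro: f_inv_into_f)
  have "(\<Sum>i\<in>g ` A. sm (c (\<phi> i)) (\<phi> i)) = (\<Sum>v\<in>A. sm (c (\<phi> (g v))) (\<phi> (g v)))"
    by (rule sum.reindex[OF inj, unfolded comp_def])
  also have "\<dots> = x" unfolding A(3) by (rule sum.cong) (auto simp: fg)
  finally have "x = (\<Sum>i\<in>g ` A. sm (c (\<phi> i)) (\<phi> i))" by simp
  moreover have "g ` A \<subseteq> B" unfolding g_def using A(2) by (auto intro: inv_into_into)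
  ultimately show ?thesis using A(1) by (intro exI[of _ "g ` A"] exI[of _ "\<lambda>i. c (\<phi> i)"]) auto
qed


lemma kfun_add: "kfunctional sm F \<Longrightarrow> F (x + y) = F x + F y"
  by (simp add: kfunctional_def)
lemma kfun_smul: "kfunctional sm F \<Longrightarrow> F (sm c x) = c * F x"
  by (simp add: kfunctional_def)
lemma kfun_zero: assumes "kfunctional sm F" shows "F 0 = 0"
  using kfun_add[OF assms, of 0 0] by simp
lemma kfun_diff: assumes "kfunctional sm F" shows "F (x - y) = F x - F y"
  using kfun_add[OF assms, of "x - y" y] by simp
lemma kfun_sum: assumes "kfunctional sm F"
  shows "F (\<Sum>i\<in>A. sm (c i) (\<phi> i)) = (\<Sum>i\<in>A. c i * F (\<phi> i))"
proof (induction A rule: infinite_finite_induct)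
  case (infinite A) then show ?case by (simp add: kfun_zero[OF assms])
next
  case empty then show ?case by (simp add: kfun_zero[OF assms])
next
  case (insert x F) then show ?case by (simp add: kfun_add[OF assms] kfun_smul[OF assms])
qed

lemma norming_bound:
  fixes sm :: "'k::real_normed_field \<Rightarrow> 'a::real_normed_vector \<Rightarrow> 'a" and F :: "'a \<Rightarrow> 'k"
  assumes nso: "normed_space_over sm" and nF: "norming sm f F"
  shows "norm (F x) \<le> norm x"
proof (cases "x = 0")
  case True then show ?thesis using nF kfun_zero by (auto simp: norming_def)
next
  case False
  have kf: "kfunctional sm F" using nF by (simp add: norming_def)
  obtain B where B: "\<forall>x. norm (F x) \<le> B * norm x" using kf by (auto simp: kfunctional_def)
  have bdd: "bdd_above ((\<lambda>x. norm (F x)) ` {x. norm x \<le> 1})"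
  proof (rule bdd_aboveI2[where M = "\<bar>B\<bar>"])
    fix y :: 'a assume "y \<in> {x. norm x \<le> 1}"
    then have y1: "norm y \<le> 1" by simp
    have "norm (F y) \<le> B * norm y" using B by blast
    also have "\<dots> \<le> \<bar>B\<bar> * norm y" by (intro mult_right_mono) auto
    also have "\<dots> \<le> \<bar>B\<bar>" using y1 by (simp add: mult_left_le)
    finally show "norm (F y) \<le> \<bar>B\<bar>" .
  qed
  define y where "y = sm (of_real (1 / norm x)) x"
  have ny: "norm y = 1" unfolding y_def nso_ofreal[OF nso] using False by simp
  have "norm (F y) \<le> dual_norm F" unfolding dual_norm_def
    by (rule cSUP_upper[OF _ bdd]) (simp add: ny)
  also have "\<dots> = 1" using nF by (simp add: norming_def)
  finally have "norm (F y) \<le> 1" .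
  moreover have "F y = of_real (1 / norm x) * F x" unfolding y_def by (rule kfun_smul[OF kf])
  ultimately have "norm (F x) / norm x \<le> 1" by (simp add: norm_mult divide_inverse mult.commute norm_inverse)
  then show ?thesis using False by (simp add: divide_le_eq)
qed




definition dq :: "'a::real_normed_vector \<Rightarrow> 'a \<Rightarrow> real \<Rightarrow> real" where
  "dq f g t = (norm (f + t *\<^sub>R g) - norm f) / t"
definition Rd :: "'a::real_normed_vector \<Rightarrow> 'a \<Rightarrow> real" where
  "Rd f g = (INF t\<in>{0<..}. dq f g t)"

lemma dq_lb: assumes "t > 0" shows "- norm g \<le> dq f g t"
proof -
  have "norm f \<le> norm (f + t *\<^sub>R g) + norm (t *\<^sub>R g)" by (metis add_diff_cancel norm_triangle_ineq4)
  then have "- (t * norm g) \<le> norm (f + t *\<^sub>R g) - norm f" using assms by simp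
  then show ?thesis using assms unfolding dq_def by (simp add: le_divide_eq mult.commute)
qed

lemma dq_mono: assumes s: "0 < s" and st: "s \<le> t" shows "dq f g s \<le> dq f g t"
proof -
  have t: "0 < t" using s st by simp
  define l where "l = s / t"
  have l0: "0 < l" "l \<le> 1" using s st t by (auto simp: l_def)
  have eq: "f + s *\<^sub>R g = (1 - l) *\<^sub>R f + l *\<^sub>R (f + t *\<^sub>R g)"
    using t by (simp add: l_def algebra_simps)
  have "norm (f + s *\<^sub>R g) \<le> norm ((1 - l) *\<^sub>R f) + norm (l *\<^sub>R (f + t *\<^sub>R g))"
    unfolding eq by (rule norm_triangle_ineq)
  also have "\<dots> = (1 - l) * norm f + l * norm (f + t *\<^sub>R g)" using l0 by simp
  finally have "norm (f + s *\<^sub>R g) - norm f \<le> l * (norm (f + t *\<^sub>R g) - norm f)"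
    by (simp add: algebra_simps)
  then have "(norm (f + s *\<^sub>R g) - norm f) / s \<le> (l * (norm (f + t *\<^sub>R g) - norm f)) / s"
    using s by (simp add: divide_right_mono)
  also have "\<dots> = (norm (f + t *\<^sub>R g) - norm f) / t" using s t by (simp add: l_def)
  finally show ?thesis unfolding dq_def .
qed

lemma dq_bdd: "bdd_below (dq f g ` {0<..})"
  by (rule bdd_belowI2[of _ "- norm g"]) (simp add: dq_lb)

lemma Rd_le: "t > 0 \<Longrightarrow> Rd f g \<le> dq f g t"
  unfolding Rd_def by (rule cINF_lower[OF dq_bdd]) simp

lemma Rd_ge: "(\<And>t. t > 0 \<Longrightarrow> b \<le> dq f g t) \<Longrightarrow> b \<le> Rd f g"
  unfolding Rd_def by (rule cINF_greatest) auto

lemma aux_half: assumes "(A::real) \<le> 1/2*B + 1/2*C" "t > 0" shows "(A - n)/t \<le> (B - n)/(2*t) + (C - n)/(2*t)"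
proof -
  have "A - n \<le> (B - n)/2 + (C - n)/2" using assms(1) by (simp add: field_simps)
  then have "(A-n)/t \<le> ((B-n)/2 + (C-n)/2)/t" using assms(2) by (simp add: divide_right_mono)
  also have "\<dots> = (B - n)/(2*t) + (C - n)/(2*t)" using assms(2) by (simp add: field_simps)
  finally show ?thesis .
qed

lemma aux_avg: "(x::real) \<le> 1 + m \<Longrightarrow> y \<le> 1 + m \<Longrightarrow> (x + y)/2 - 1 \<le> m"
  by (simp add: field_simps)

lemma Rd_sub: "Rd f (g + h) \<le> Rd f g + Rd f h"
proof -
  have key: "Rd f (g + h) \<le> dq f g t1 + dq f h t2" if "t1 > 0" "t2 > 0" for t1 t2
  proof -
    define t where "t = min t1 t2 / 2"
    have t: "t > 0" "2 * t \<le> t1" "2 * t \<le> t2" using that by (auto simp: t_def)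
    have hf: "(1/2::real) *\<^sub>R f + (1/2::real) *\<^sub>R f = f" by (simp flip: scaleR_add_left)
    have eq: "f + t *\<^sub>R (g + h) = (1/2) *\<^sub>R (f + (2*t) *\<^sub>R g) + (1/2) *\<^sub>R (f + (2*t) *\<^sub>R h)"
    proof -
      have "(1/2) *\<^sub>R (f + (2*t) *\<^sub>R g) + (1/2) *\<^sub>R (f + (2*t) *\<^sub>R h)
          = ((1/2::real) *\<^sub>R f + (1/2::real) *\<^sub>R f) + ((1/2::real) *\<^sub>R ((2*t) *\<^sub>R g) + (1/2::real) *\<^sub>R ((2*t) *\<^sub>R h))"
        by (simp only: scaleR_add_right add_ac)
      also have "\<dots> = f + t *\<^sub>R (g + h)" unfolding hf by (simp add: scaleR_add_right)
      finally show ?thesis by simp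
    qed
    have "norm (f + t *\<^sub>R (g + h)) \<le> (1/2) * norm (f + (2*t) *\<^sub>R g) + (1/2) * norm (f + (2*t) *\<^sub>R h)"
      unfolding eq by (rule order.trans[OF norm_triangle_ineq]) simp
    then have "dq f (g + h) t \<le> dq f g (2*t) + dq f h (2*t)"
      unfolding dq_def by (rule aux_half[OF _ t(1)])
    also have "\<dots> \<le> dq f g t1 + dq f h t2"
      using t by (intro add_mono dq_mono) auto
    finally show ?thesis using Rd_le[OF t(1), of f "g + h"] by simp
  qed
  have "Rd f (g + h) - Rd f g \<le> dq f h t2" if "t2 > 0" for t2
  proof -
    have "Rd f (g + h) - dq f h t2 \<le> Rd f g"
      by (rule Rd_ge) (use key that in force)
    then show ?thesis by simp
  qed
  then have "Rd f (g + h) - Rd f g \<le> Rd f h" by (rule Rd_ge)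
  then show ?thesis by simp
qed

lemma Rd_zero: "Rd f 0 = 0"
proof -
  have "dq f 0 t = 0" for t by (simp add: dq_def)
  then show ?thesis using Rd_le[of 1 f 0] Rd_ge[of 0 f 0] by force
qed

lemma Rd_pos_hom: assumes c: "c > 0" shows "Rd f (c *\<^sub>R g) = c * Rd f g"
proof -
  have dqc: "dq f (c *\<^sub>R g) t = c * dq f g (c * t)" if "t > 0" for t
    using c that by (simp add: dq_def field_simps)
  have "Rd f (c *\<^sub>R g) / c \<le> dq f g s" if "s > 0" for s
  proof -
    have "Rd f (c *\<^sub>R g) \<le> dq f (c *\<^sub>R g) (s / c)" using that c by (intro Rd_le) simp
    also have "\<dots> = c * dq f g s" using dqc[of "s/c"] that c by simp
    finally show ?thesis using c by (simp add: divide_le_eq mult.commute)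
  qed
  then have 1: "Rd f (c *\<^sub>R g) / c \<le> Rd f g" by (rule Rd_ge)
  have "c * Rd f g \<le> dq f (c *\<^sub>R g) t" if "t > 0" for t
  proof -
    have "Rd f g \<le> dq f g (c * t)" using that c by (intro Rd_le) simp
    then show ?thesis using dqc[OF that] c by simp
  qed
  then have 2: "c * Rd f g \<le> Rd f (c *\<^sub>R g)" by (rule Rd_ge)
  show ?thesis using 1 2 c by (simp add: divide_le_eq mult.commute)
qed

lemma Rd_f: assumes "f \<noteq> 0" shows "Rd f f = norm f"
proof -
  have "dq f f t = norm f" if "t > 0" for t
  proof -
    have "norm (f + t *\<^sub>R f) = norm ((1 + t) *\<^sub>R f)" by (simp add: algebra_simps)
    also have "\<dots> = (1 + t) * norm f" using that by simp
    finally show ?thesis using that unfolding dq_def by (simp add: field_simps)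
  qed
  then show ?thesis using Rd_le[of 1 f f] Rd_ge[of "norm f" f f] by force
qed

lemma Rd_upper: "Rd f g \<le> norm g"
proof -
  have "dq f g 1 \<le> norm g" unfolding dq_def using norm_triangle_ineq[of f g] by simp
  then show ?thesis using Rd_le[of 1 f g] by simp
qed

lemma Rd_ann:
  assumes "\<And>t. t > 0 \<Longrightarrow> norm f \<le> norm (f + t *\<^sub>R v)"
  shows "0 \<le> Rd f v"
  by (rule Rd_ge) (use assms in \<open>simp add: dq_def\<close>)

lemma modsm_upper:
  fixes x y :: "'a::real_normed_vector"
  assumes "norm x = 1" "norm y = 1"
  shows "(norm (x + u *\<^sub>R y) + norm (x - u *\<^sub>R y)) / 2 - 1 \<le> modulus_smoothness TYPE('a) u"
proof -
  have bdd: "bdd_above ((\<lambda>p. (norm (fst p + u *\<^sub>R snd p) + norm (fst p - u *\<^sub>R snd p)) / 2 - 1) `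
      {(x::'a, y::'a). norm x = 1 \<and> norm y = 1})"
  proof (rule bdd_aboveI2[where M = "\<bar>u\<bar>"])
    fix p :: "'a \<times> 'a" assume "p \<in> {(x, y). norm x = 1 \<and> norm y = 1}"
    then have n: "norm (fst p) = 1" "norm (snd p) = 1" by auto
    have "norm (fst p + u *\<^sub>R snd p) \<le> 1 + \<bar>u\<bar>" using norm_triangle_ineq[of "fst p" "u *\<^sub>R snd p"] n by simp
    moreover have "norm (fst p - u *\<^sub>R snd p) \<le> 1 + \<bar>u\<bar>" using norm_triangle_ineq4[of "fst p" "u *\<^sub>R snd p"] n by simp
    ultimately show "(norm (fst p + u *\<^sub>R snd p) + norm (fst p - u *\<^sub>R snd p)) / 2 - 1 \<le> \<bar>u\<bar>" by (rule aux_avg)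
  qed
  show ?thesis unfolding modulus_smoothness_def
    using cSUP_upper[OF _ bdd, of "(x, y)"] assms by simp
qed

lemma Rd_odd:
  fixes f :: "'a::real_normed_vector"
  assumes us: "uniformly_smooth TYPE('a)" and f: "f \<noteq> 0"
  shows "Rd f (- g) = - Rd f g"
proof -
  have le: "Rd f g + Rd f (- g) \<le> e" if e: "e > 0" for e
  proof (cases "g = 0")
    case True then show ?thesis using e by (simp add: Rd_zero)
  next
    case False
    have "eventually (\<lambda>u. modulus_smoothness TYPE('a) u / u < e / (2 * norm g)) (at_right 0)"
      using us unfolding uniformly_smooth_def by (rule order_tendstoD(2)) (use e False in simp)
    then obtain b where b: "b > 0" "\<And>u. 0 < u \<Longrightarrow> u < b \<Longrightarrow> modulus_smoothness TYPE('a) u / u < e / (2 * norm g)"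
      unfolding eventually_at_right_field by auto
    define u where "u = b / 2"
    have u0: "u > 0" "u < b" using b(1) by (auto simp: u_def)
    have u: "u > 0" "modulus_smoothness TYPE('a) u / u < e / (2 * norm g)" using u0 b(2)[OF u0] by auto
    define t where "t = u * norm f / norm g"
    have t: "t > 0" using u f False by (simp add: t_def)
    define x where "x = (1 / norm f) *\<^sub>R f"
    define y where "y = (1 / norm g) *\<^sub>R g"
    have nx: "norm x = 1" "norm y = 1" using f False by (auto simp: x_def y_def)
    have e1: "f + t *\<^sub>R g = norm f *\<^sub>R (x + u *\<^sub>R y)"
      using f False by (simp add: x_def y_def t_def algebra_simps)
    have e2: "f + t *\<^sub>R (- g) = norm f *\<^sub>R (x - u *\<^sub>R y)"
      using f False by (simp add: x_def y_def t_def algebra_simps)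
    have n1: "norm (f + t *\<^sub>R g) = norm f * norm (x + u *\<^sub>R y)" by (simp only: e1 norm_scaleR) simp
    have n2: "norm (f + t *\<^sub>R (- g)) = norm f * norm (x - u *\<^sub>R y)" by (simp only: e2 norm_scaleR) simp
    have "dq f g t + dq f (- g) t = norm f * (norm (x + u *\<^sub>R y) + norm (x - u *\<^sub>R y) - 2) / t"
      unfolding dq_def n1 n2 using t by (simp add: field_simps)
    also have "\<dots> \<le> norm f * (2 * modulus_smoothness TYPE('a) u) / t"
    proof -
      have "norm (x + u *\<^sub>R y) + norm (x - u *\<^sub>R y) - 2 \<le> 2 * modulus_smoothness TYPE('a) u"
        using modsm_upper[OF nx, of u] by (simp add: field_simps)
      then show ?thesis using t by (intro divide_right_mono mult_left_mono) auto
    qed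
    also have "\<dots> = 2 * norm g * (modulus_smoothness TYPE('a) u / u)"
      using u f False by (simp add: t_def field_simps)
    also have "\<dots> < e" using u(2) False by (simp add: field_simps)
    finally have "dq f g t + dq f (- g) t < e" .
    then show ?thesis using Rd_le[OF t, of f g] Rd_le[OF t, of f "-g"] by simp
  qed
  have "Rd f g + Rd f (- g) \<le> 0"
  proof (rule ccontr)
    assume "\<not> ?thesis"
    then show False using le[of "(Rd f g + Rd f (- g)) / 2"] by simp
  qed
  moreover have "0 \<le> Rd f g + Rd f (- g)" using Rd_sub[of f g "-g"] by (simp add: Rd_zero)
  ultimately show ?thesis by simp
qed

lemma Rd_add:
  assumes us: "uniformly_smooth TYPE('a)" and f: "(f::'a::real_normed_vector) \<noteq> 0"
  shows "Rd f (g + h) = Rd f g + Rd f h"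
proof -
  have 1: "Rd f (- g + - h) \<le> Rd f (- g) + Rd f (- h)" by (rule Rd_sub)
  have "- g + - h = - (g + h)" by simp
  then have "Rd f (- (g + h)) \<le> Rd f (- g) + Rd f (- h)" using 1 by metis
  then have "Rd f g + Rd f h \<le> Rd f (g + h)" unfolding Rd_odd[OF us f] by simp
  then show ?thesis using Rd_sub[of f g h] by simp
qed

lemma Rd_scale:
  assumes us: "uniformly_smooth TYPE('a)" and f: "(f::'a::real_normed_vector) \<noteq> 0"
  shows "Rd f (c *\<^sub>R g) = c * Rd f g"
proof (cases c "0::real" rule: linorder_cases)
  case less
  have "Rd f (c *\<^sub>R g) = Rd f (- ((- c) *\<^sub>R g))" by simp
  also have "\<dots> = - ((- c) * Rd f g)" using Rd_odd[OF us f] Rd_pos_hom[of "-c" f g] less by simp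
  finally show ?thesis by simp
next
  case equal then show ?thesis by (simp add: Rd_zero)
next
  case greater then show ?thesis by (rule Rd_pos_hom)
qed

lemma Rd_abs:
  assumes us: "uniformly_smooth TYPE('a)" and f: "(f::'a::real_normed_vector) \<noteq> 0"
  shows "\<bar>Rd f g\<bar> \<le> norm g"
  using Rd_upper[of f g] Rd_upper[of f "-g"] Rd_odd[OF us f, of g] by simp

lemma Rd_vanish:
  assumes us: "uniformly_smooth TYPE('a)" and f: "(f::'a::real_normed_vector) \<noteq> 0"
    and h: "\<And>t. norm f \<le> norm (f + t *\<^sub>R v)"
  shows "Rd f v = 0"
proof -
  have "0 \<le> Rd f v" by (rule Rd_ann) (use h in auto)
  moreover have "0 \<le> Rd f (- v)" by (rule Rd_ann) (use h[of "- _"] in auto)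
  ultimately show ?thesis using Rd_odd[OF us f, of v] by simp
qed



definition NFprop :: "('k::real_normed_field \<Rightarrow> 'a::real_normed_vector \<Rightarrow> 'a) \<Rightarrow> bool" where
  "NFprop sm \<longleftrightarrow> (\<forall>f W. f \<noteq> 0 \<and> (\<forall>v\<in>kspan sm W. norm f \<le> norm (f + v)) \<longrightarrow>
      (\<exists>F. norming sm f F \<and> (\<forall>v\<in>kspan sm W. F v = 0)))"

lemma dual_norm_eq1:
  fixes F :: "'a::real_normed_vector \<Rightarrow> 'k::real_normed_field"
  assumes b: "\<And>x. norm (F x) \<le> norm x" and x0: "norm x0 = 1" "norm (F x0) = 1"
  shows "dual_norm F = 1"
proof -
  have bdd: "bdd_above ((\<lambda>x. norm (F x)) ` {x. norm x \<le> 1})"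
    by (rule bdd_aboveI2[where M = 1]) (use b order_trans in blast)
  have "dual_norm F \<le> 1" unfolding dual_norm_def
    by (rule cSUP_least) (use b order_trans in \<open>auto intro: exI[of _ 0]\<close>)
  moreover have "1 \<le> dual_norm F" unfolding dual_norm_def
    using cSUP_upper[OF _ bdd, of x0] x0 by simp
  ultimately show ?thesis by simp
qed

lemma NF_real:
  assumes us: "uniformly_smooth TYPE('a::real_normed_vector)"
  shows "NFprop (scaleR :: real \<Rightarrow> 'a \<Rightarrow> 'a)"
  unfolding NFprop_def
proof (intro allI impI, elim conjE)
  fix f :: 'a and W assume f: "f \<noteq> 0" and h: "\<forall>v\<in>kspan scaleR W. norm f \<le> norm (f + v)"
  define F where "F = Rd f"
  have kf: "kfunctional (scaleR :: real \<Rightarrow> 'a \<Rightarrow> 'a) F"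
    unfolding kfunctional_def F_def
    using Rd_add[OF us f] Rd_scale[OF us f] Rd_abs[OF us f] by (auto intro!: exI[of _ 1])
  have b: "norm (F x) \<le> norm x" for x using Rd_abs[OF us f] by (simp add: F_def)
  have Ff: "F f = norm f" using Rd_f[OF f] by (simp add: F_def)
  define x0 where "x0 = (1 / norm f) *\<^sub>R f"
  have "F x0 = 1" unfolding x0_def F_def using Rd_scale[OF us f] Rd_f[OF f] f by simp
  moreover have "norm x0 = 1" using f by (simp add: x0_def)
  ultimately have dn: "dual_norm F = 1" using dual_norm_eq1[OF b] by simp
  have ann: "F v = 0" if v: "v \<in> kspan scaleR W" for v
  proof -
    have "norm f \<le> norm (f + t *\<^sub>R v)" for t
      using h kspan_scaleR[OF nso_scaleR v, of t] by blast
    then show ?thesis unfolding F_def by (rule Rd_vanish[OF us f])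
  qed
  show "\<exists>F. norming scaleR f F \<and> (\<forall>v\<in>kspan scaleR W. F v = 0)"
    using kf dn Ff ann by (intro exI[of _ F]) (auto simp: norming_def)
qed

lemma cmod_1i: "cmod (1 + \<i> * complex_of_real a) \<le> 1 + a\<^sup>2"
proof -
  have "cmod (1 + \<i> * complex_of_real a) = sqrt (1 + a\<^sup>2)"
    by (simp add: cmod_def)
  also have "\<dots> \<le> 1 + a\<^sup>2"
  proof -
    have "(1 + a\<^sup>2) * 1 \<le> (1 + a\<^sup>2) * (1 + a\<^sup>2)" by (rule mult_left_mono) auto
    then have "1 + a\<^sup>2 \<le> (1 + a\<^sup>2)\<^sup>2" by (simp add: power2_eq_square)
    then show ?thesis by (intro real_le_lsqrt) auto
  qed
  finally show ?thesis .
qed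

lemma aux_div: "(X::real) > 0 \<Longrightarrow> (r / (2*X)) * X = r / 2"
  by (simp add: field_simps)

lemma NF_complex:
  fixes sm :: "complex \<Rightarrow> 'b::real_normed_vector \<Rightarrow> 'b"
  assumes nso: "normed_space_over sm" and us: "uniformly_smooth TYPE('b)"
  shows "NFprop sm"
  unfolding NFprop_def
proof (intro allI impI, elim conjE)
  fix f :: 'b and W assume f: "f \<noteq> 0" and h: "\<forall>v\<in>kspan sm W. norm f \<le> norm (f + v)"
  define R where "R = Rd f"
  define F where "F g = Complex (R g) (- R (sm \<i> g))" for g
  have Radd: "R (x + y) = R x + R y" for x y unfolding R_def by (rule Rd_add[OF us f])
  have Rsc: "R (r *\<^sub>R x) = r * R x" for r x unfolding R_def by (rule Rd_scale[OF us f])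
  have Rsm: "R (sm c x) = Re c * R x + Im c * R (sm \<i> x)" for c x
  proof -
    have ceq: "c = of_real (Re c) + of_real (Im c) * \<i>" by (simp add: complex_eq_iff)
    have "sm c x = sm (of_real (Re c) + of_real (Im c) * \<i>) x"
      using ceq by (rule arg_cong[where f = "\<lambda>c. sm c x"])
    also have "\<dots> = sm (of_real (Re c)) x + sm (of_real (Im c) * \<i>) x" by (rule nso_add_left[OF nso])
    also have "\<dots> = sm (of_real (Re c)) x + sm (of_real (Im c)) (sm \<i> x)" by (simp only: nso_mult[OF nso])
    also have "\<dots> = Re c *\<^sub>R x + Im c *\<^sub>R (sm \<i> x)" by (simp only: nso_ofreal[OF nso])
    finally have "sm c x = Re c *\<^sub>R x + Im c *\<^sub>R (sm \<i> x)" .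
    then show ?thesis by (simp add: Radd Rsc)
  qed
  have smii: "sm \<i> (sm \<i> x) = - x" for x
    using nso_mult[OF nso, of \<i> \<i> x] nso_minus_left[OF nso, of 1 x] nso_one[OF nso, of x] by simp
  have Rodd: "R (- x) = - R x" for x unfolding R_def by (rule Rd_odd[OF us f])
  have Fsm: "F (sm c x) = c * F x" for c x
  proof -
    have 1: "R (sm c x) = Re c * R x + Im c * R (sm \<i> x)" by (rule Rsm)
    have "R (sm \<i> (sm c x)) = R (sm c (sm \<i> x))"
      using nso_mult[OF nso, of \<i> c x] nso_mult[OF nso, of c \<i> x] by (simp add: mult.commute)
    also have "\<dots> = Re c * R (sm \<i> x) + Im c * R (- x)" using Rsm[of c "sm \<i> x"] smii by simp
    finally have 2: "R (sm \<i> (sm c x)) = Re c * R (sm \<i> x) - Im c * R x" by (simp add: Rodd)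
    show ?thesis unfolding F_def by (simp add: complex_eq_iff 1 2)
  qed
  have Fadd: "F (x + y) = F x + F y" for x y
    unfolding F_def by (simp add: nso_add_right[OF nso] Radd complex_eq_iff)
  have Rup: "R x \<le> norm x" for x unfolding R_def by (rule Rd_upper)
  have Fb: "norm (F x) \<le> norm x" for x
  proof (cases "F x = 0")
    case True then show ?thesis by simp
  next
    case False
    define z where "z = F x"
    define w where "w = cnj z / of_real (cmod z)"
    have nw: "cmod w = 1" using False by (simp add: w_def z_def norm_divide)
    have "w * z = of_real (cmod z)"
    proof -
      have "of_real ((cmod z)\<^sup>2) = z * cnj z" by (rule complex_norm_square)
      then have "cnj z * z = of_real (cmod z) * of_real (cmod z)" by (simp add: power2_eq_square mult.commute)
      then show ?thesis using False unfolding w_def z_def by (simp add: field_simps)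
    qed
    then have "F (sm w x) = of_real (cmod z)" using Fsm[of w x] by (simp add: z_def)
    then have "R (sm w x) = cmod z" unfolding F_def by (simp add: complex_eq_iff)
    then have "cmod z \<le> norm (sm w x)" using Rup[of "sm w x"] by simp
    also have "\<dots> = norm x" using nw by (simp add: nso_norm[OF nso])
    finally show ?thesis by (simp add: z_def)
  qed
  have kf: "kfunctional sm F" unfolding kfunctional_def
    using Fadd Fsm Fb by (auto intro!: exI[of _ 1])
  have Rif: "R (sm (\<i> * of_real s) f) \<le> 0" for s
  proof -
    have "R (sm (\<i> * of_real s) f) \<le> t * (s\<^sup>2 * norm f)" if t: "t > 0" for t
    proof -
      have "f + t *\<^sub>R sm (\<i> * of_real s) f = sm (1 + \<i> * of_real (t * s)) f"
        using nso_add_left[OF nso, of 1 "\<i> * of_real (t * s)" f] nso_one[OF nso, of f]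
          nso_mult[OF nso, of "of_real t" "\<i> * of_real s" f] nso_ofreal[OF nso, of t]
        by (simp add: mult_ac)
      then have "norm (f + t *\<^sub>R sm (\<i> * of_real s) f) \<le> (1 + (t * s)\<^sup>2) * norm f"
        using cmod_1i[of "t * s"] by (simp add: nso_norm[OF nso] mult_right_mono)
      then have "dq f (sm (\<i> * of_real s) f) t \<le> t * (s\<^sup>2 * norm f)"
        using t unfolding dq_def by (simp add: field_simps power2_eq_square)
      then show ?thesis using Rd_le[OF t] unfolding R_def by (meson order_trans)
    qed
    show ?thesis
    proof (rule ccontr)
      assume a: "\<not> ?thesis"
      show False
      proof (cases "s\<^sup>2 * norm f = 0")
        case True then show False using a \<open>\<And>t. t > 0 \<Longrightarrow> _\<close>[of 1] f by auto
      next
        case False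
        have p: "s\<^sup>2 * norm f > 0" using False by (simp add: less_le)
        define t where "t = R (sm (\<i> * of_real s) f) / (2 * (s\<^sup>2 * norm f))"
        have t: "t > 0" using a p by (simp add: t_def)
        have "t * (s\<^sup>2 * norm f) = R (sm (\<i> * of_real s) f) / 2" unfolding t_def by (rule aux_div[OF p])
        then show False using \<open>\<And>t. t > 0 \<Longrightarrow> _\<close>[OF t] a by simp
      qed
    qed
  qed
  have "R (sm \<i> f) = 0"
  proof -
    have 1: "R (sm \<i> f) \<le> 0" using Rif[of 1] by simp
    have "R (sm (\<i> * of_real (-1)) f) \<le> 0" by (rule Rif)
    then have "R (- sm \<i> f) \<le> 0" by (simp add: nso_minus_left[OF nso])
    then show ?thesis using 1 Rodd by (metis add.inverse_inverse neg_0_le_iff_le order_antisym)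
  qed
  then have Ff: "F f = of_real (norm f)" unfolding F_def R_def using Rd_f[OF f] by (simp add: complex_eq_iff)
  define x0 where "x0 = sm (of_real (1 / norm f)) f"
  have "F x0 = 1" unfolding x0_def using Fsm Ff f by simp
  moreover have "norm x0 = 1" using f by (simp add: x0_def nso_norm[OF nso] norm_divide)
  ultimately have dn: "dual_norm F = 1" using dual_norm_eq1[OF Fb] by simp
  have ann: "F v = 0" if v: "v \<in> kspan sm W" for v
  proof -
    have "R w = 0" if w: "w \<in> kspan sm W" for w
    proof -
      have "norm f \<le> norm (f + t *\<^sub>R w)" for t
        using h kspan_scaleR[OF nso w, of t] by blast
      then show ?thesis unfolding R_def by (rule Rd_vanish[OF us f])
    qed
    then show ?thesis unfolding F_def using v kspan_smul[OF nso v, of \<i>] by (simp add: complex_eq_iff)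
  qed
  show "\<exists>F. norming sm f F \<and> (\<forall>v\<in>kspan sm W. F v = 0)"
    using kf dn Ff ann by (intro exI[of _ F]) (auto simp: norming_def)
qed



locale wsetup =
  fixes sm :: "'k::real_normed_field \<Rightarrow> 'a::real_normed_vector \<Rightarrow> 'a"
    and \<phi> :: "'i \<Rightarrow> 'a" and \<tau> :: real and G :: "nat \<Rightarrow> 'a \<Rightarrow> 'a"
    and N D :: nat and kN :: real and Q :: "real \<Rightarrow> real" and H :: "nat \<Rightarrow> real" and lam :: real
    and f :: 'a and T :: "'i set" and a :: "'i \<Rightarrow> 'k" and ix :: "nat \<Rightarrow> 'i"
  assumes nso: "normed_space_over sm"
    and NF: "NFprop sm"
    and phinz: "\<forall>i. \<phi> i \<noteq> 0"
    and tau0: "0 < \<tau>" and tau1: "\<tau> \<le> 1"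
    and N1: "1 \<le> N" and ND: "N < D"
    and Qmono: "mono_on {0..} Q" and Qpos: "\<forall>t>0. 0 < Q t"
    and Hpos: "\<forall>n\<ge>1. 0 < H n" and Hmono: "mono_on {1..} H"
    and DQ: "property_DQ sm \<phi> Q" and A1: "property_A1 sm \<phi> N kN D" and A3: "property_A3 sm \<phi> N H D"
    and lam: "1 < lam" and kN0: "0 < kN"
    and qc: "quasi_convex1 (\<lambda>n. 1 / Q ((\<tau> / 2) * (1 - 1 / sqrt lam) / H n))"
    and budget: "real N + 8 * ln (8 * (1 + lam) * kN / (sqrt lam - 1))
            * (1 / Q ((\<tau> / 2) * (1 - 1 / sqrt lam) / H (2 * N))) < real D"
    and Tfin: "finite T" and Tcard: "card T \<le> N"
    and G0: "G 0 f = 0"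
    and ixp: "\<forall>n. (f - G n f = 0 \<longrightarrow> G (Suc n) f = f) \<and>
          (f - G n f \<noteq> 0 \<longrightarrow>
             (\<forall>F. norming sm (f - G n f) F \<longrightarrow>
                (\<forall>j. \<tau> * norm (F (\<phi> j)) \<le> norm (F (\<phi> (ix (Suc n)))))) \<and>
             G (Suc n) f \<in> kspan sm ((\<lambda>k. \<phi> (ix k)) ` {1..Suc n}) \<and>
             norm (f - G (Suc n) f) = infdist f (kspan sm ((\<lambda>k. \<phi> (ix k)) ` {1..Suc n})))"
begin

definition "mu = sqrt lam"
definition "cc = (\<tau> / 2) * (1 - 1 / mu)"
definition "Gf n = 1 / Q (cc / H n)"
definition "Lam = 8 * (1 + lam) * kN / (mu - 1)"
definition "M = nat \<lfloor>8 * ln Lam * Gf (2 * N)\<rfloor>"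
definition "PS A = (\<Sum>i\<in>A. sm (a i) (\<phi> i))"
definition "Phi = PS T"
definition "sig = norm (f - Phi)"
definition "r t = norm (f - G t f)"
definition "Gam t = ix ` {1..t}"
definition "V t = kspan sm (\<phi> ` Gam t)"
definition "U t = T - Gam t"

lemma V_alt: "kspan sm ((\<lambda>k. \<phi> (ix k)) ` {1..t}) = V t"
  unfolding V_def Gam_def by (simp add: image_image)

lemma mu_gt1: "mu > 1" unfolding mu_def using lam by simp
lemma lam_mu: "lam = mu * mu" unfolding mu_def using lam by simp

lemma inv: "G t f \<in> V t \<and> r t = infdist f (V t)"
proof (induction t)
  case 0
  have "V 0 = {0}"
  proof -
    have "Gam 0 = {}" by (simp add: Gam_def)
    then show ?thesis unfolding V_def kspan_def by auto
  qed
  then show ?case by (simp add: G0 r_def)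
next
  case (Suc n)
  have sub: "V n \<subseteq> V (Suc n)" unfolding V_def Gam_def
    by (intro kspan_mono image_mono) auto
  show ?case
  proof (cases "f - G n f = 0")
    case True
    then have "G (Suc n) f = f" using spec[OF ixp, of n] by simp
    moreover have "f \<in> V (Suc n)"
    proof -
      have "f = G n f" using True by simp
      then show ?thesis using Suc.IH sub by auto
    qed
    ultimately show ?thesis by (simp add: r_def)
  next
    case False
    then show ?thesis using ixp[rule_format, of n, unfolded V_alt] by (simp add: r_def)
  qed
qed

lemma r_nn: "0 \<le> r t" by (simp add: r_def)

lemma V_mono: "s \<le> t \<Longrightarrow> V s \<subseteq> V t"
  unfolding V_def Gam_def by (intro kspan_mono image_mono) auto

lemma Gam_mono: "s \<le> t \<Longrightarrow> Gam s \<subseteq> Gam t"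
  unfolding Gam_def by auto

lemma U_mono: "s \<le> t \<Longrightarrow> U t \<subseteq> U s"
  unfolding U_def using Gam_mono by auto

lemma U_sub: "U t \<subseteq> T" unfolding U_def by auto

lemma zero_V: "0 \<in> V t" unfolding V_def by (rule kspan_zero)

lemma r_le: "v \<in> V t \<Longrightarrow> r t \<le> norm (f - v)"
  using inv[of t] infdist_le[of v "V t" f] by (simp add: dist_norm)

lemma r_anti: "s \<le> t \<Longrightarrow> r t \<le> r s"
proof -
  assume st: "s \<le> t"
  have "r t = infdist f (V t)" using inv by simp
  also have "\<dots> \<le> infdist f (V s)" by (rule infdist_mono[OF V_mono[OF st]]) (use zero_V in auto)
  also have "\<dots> = r s" using inv by simp
  finally show ?thesis .
qed

lemma card_Gam: "card (Gam t) \<le> t"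
  unfolding Gam_def using card_image_le[of "{1..t}" ix] by simp

lemma finite_Gam: "finite (Gam t)" unfolding Gam_def by simp

lemma PS_in_V: "A \<subseteq> Gam t \<Longrightarrow> PS A \<in> V t"
  unfolding PS_def V_def using finite_Gam
  by (intro kspan_sum_idx[OF nso]) (auto intro: finite_subset)

lemma PS_split: "A \<subseteq> B \<Longrightarrow> finite B \<Longrightarrow> PS B = PS A + PS (B - A)"
  unfolding PS_def by (metis add.commute sum.subset_diff)

lemma comb:
  assumes S0: "S0 \<subseteq> T"
  shows "\<exists>B b. finite B \<and> S0 \<subseteq> B \<and> card B \<le> N + t \<and> (\<forall>i\<in>S0 - Gam t. b i = a i)
            \<and> (\<Sum>i\<in>B. sm (b i) (\<phi> i)) = PS S0 - G t f"
proof -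
  have "G t f \<in> kspan sm (\<phi> ` Gam t)" using inv[of t] by (simp add: V_def)
  from kspan_rep_idx[OF this] obtain Gp c where Gp: "finite Gp" "Gp \<subseteq> Gam t" "G t f = (\<Sum>i\<in>Gp. sm (c i) (\<phi> i))"
    by (elim exE conjE)
  have finS0: "finite S0" using S0 Tfin finite_subset by auto
  define B where "B = S0 \<union> Gp"
  define b where "b i = (if i \<in> S0 then a i else 0) - (if i \<in> Gp then c i else 0)" for i
  have finB: "finite B" using finS0 Gp(1) by (simp add: B_def)
  have S0B: "S0 \<subseteq> B" "Gp \<subseteq> B" by (auto simp: B_def)
  have "card B \<le> card S0 + card Gp" unfolding B_def by (rule card_Un_le)
  also have "\<dots> \<le> N + t"
  proof -
    have "card S0 \<le> N" using card_mono[OF Tfin S0] Tcard by simp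
    moreover have "card Gp \<le> t" using card_mono[OF finite_Gam Gp(2)] card_Gam[of t] by simp
    ultimately show ?thesis by simp
  qed
  finally have cB: "card B \<le> N + t" .
  have bS: "\<forall>i\<in>S0 - Gam t. b i = a i" using Gp(2) by (auto simp: b_def)
  have e1: "PS S0 = (\<Sum>i\<in>B. sm (if i \<in> S0 then a i else 0) (\<phi> i))"
  proof -
    have "(\<Sum>i\<in>B. sm (if i \<in> S0 then a i else 0) (\<phi> i)) = (\<Sum>i\<in>S0. sm (if i \<in> S0 then a i else 0) (\<phi> i))"
      by (rule sum.mono_neutral_right[OF finB S0B(1)]) (simp add: nso_zero_left[OF nso])
    also have "\<dots> = PS S0" unfolding PS_def by (rule sum.cong) simp_all
    finally show ?thesis by simp
  qed
  have e2: "G t f = (\<Sum>i\<in>B. sm (if i \<in> Gp then c i else 0) (\<phi> i))"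
  proof -
    have "(\<Sum>i\<in>B. sm (if i \<in> Gp then c i else 0) (\<phi> i)) = (\<Sum>i\<in>Gp. sm (if i \<in> Gp then c i else 0) (\<phi> i))"
      by (rule sum.mono_neutral_right[OF finB S0B(2)]) (simp add: nso_zero_left[OF nso])
    also have "\<dots> = G t f" unfolding Gp(3) by (rule sum.cong) simp_all
    finally show ?thesis by simp
  qed
  have se: "(\<Sum>i\<in>B. sm (b i) (\<phi> i)) = PS S0 - G t f"
    unfolding e1 e2 b_def nso_diff_left[OF nso] by (rule sum_subtractf)
  show ?thesis
    by (rule exI[of _ B], rule exI[of _ b]) (use finB S0B cB bS se in blast)
qed

lemma norm_PhiG: "norm (PS S0 - G t f) \<le> norm (f - PS S0) + r t"
proof -
  have "PS S0 - G t f = (f - G t f) - (f - PS S0)" by simp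
  then show ?thesis unfolding r_def using norm_triangle_ineq4[of "f - G t f" "f - PS S0"] by simp
qed

lemma LB:
  assumes t: "N + t < D" and A: "A \<subseteq> U t"
  shows "norm (PS A) \<le> kN * (r t + sig)"
proof -
  obtain B b where B: "finite B" "T \<subseteq> B" "card B \<le> N + t" "\<forall>i\<in>T - Gam t. b i = a i"
    "(\<Sum>i\<in>B. sm (b i) (\<phi> i)) = PS T - G t f"
    using comb[of T t] by blast
  have AT: "A \<subseteq> T" using A U_sub by blast
  have AB: "A \<subseteq> B" using AT B(2) by blast
  have cA: "card A \<le> N" using card_mono[OF Tfin AT] Tcard by simp
  have cB: "card B < D" using B(3) t by simp
  have h: "finite B \<and> A \<subseteq> B \<and> card A \<le> N \<and> card B < D \<longrightarrow>
      norm (\<Sum>j\<in>A. sm (b j) (\<phi> j)) \<le> kN * norm (\<Sum>j\<in>B. sm (b j) (\<phi> j))"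
    using spec[OF spec[OF spec[OF A1[unfolded property_A1_def], of b], of A], of B] .
  have 1: "norm (\<Sum>j\<in>A. sm (b j) (\<phi> j)) \<le> kN * norm (\<Sum>j\<in>B. sm (b j) (\<phi> j))"
    using h B(1) AB cA cB by blast
  have 2: "(\<Sum>j\<in>A. sm (b j) (\<phi> j)) = PS A"
    unfolding PS_def using A B(4) by (intro sum.cong) (auto simp: U_def)
  have 3: "norm (PS T - G t f) \<le> sig + r t"
    using norm_PhiG[of T t] by (simp add: sig_def Phi_def)
  have "norm (PS A) \<le> kN * norm (PS T - G t f)" using 1 unfolding 2 B(5) .
  also have "\<dots> \<le> kN * (sig + r t)" using 3 kN0 by (intro mult_left_mono) auto
  finally show ?thesis by (simp add: add.commute)
qed

lemma UB: "r t \<le> sig + norm (PS (U t))"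
proof -
  have "PS (T \<inter> Gam t) \<in> V t" by (rule PS_in_V) auto
  then have "r t \<le> norm (f - PS (T \<inter> Gam t))" by (rule r_le)
  also have "f - PS (T \<inter> Gam t) = (f - Phi) + PS (U t)"
    using PS_split[of "T \<inter> Gam t" T] Tfin by (simp add: Phi_def U_def Diff_Int)
  also have "norm \<dots> \<le> sig + norm (PS (U t))" unfolding sig_def by (rule norm_triangle_ineq)
  finally show ?thesis .
qed

end


lemma kspan_empty: "kspan sm {} = {0}"
  unfolding kspan_def by auto

lemma dl_alg:
  fixes r mu tau HA gam e :: real
  assumes r: "r > 0" and mu: "mu > 1" and tau: "tau > 0" and HA: "HA > 0" and gam: "gam \<ge> 0"
    and e: "e \<ge> 0" and me: "mu * e \<le> r" and main: "r \<le> e + (gam / tau) * HA * (e + r)"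
  shows "tau / 2 * (1 - 1 / mu) / HA \<le> gam"
proof -
  have e1: "e \<le> r / mu" using me mu by (simp add: field_simps)
  have e2: "r / mu \<le> r" using mu r by (simp add: field_simps)
  have "r * (1 - 1 / mu) \<le> r - e" using e1 by (simp add: field_simps)
  also have "\<dots> \<le> (gam / tau) * HA * (e + r)" using main by simp
  also have "\<dots> \<le> (gam / tau) * HA * (2 * r)"
    using e1 e2 gam tau HA by (intro mult_left_mono) auto
  also have "(gam / tau) * HA * (2 * r) = r * (2 * gam * HA / tau)" by (simp add: field_simps)
  finally have "r * (1 - 1 / mu) \<le> r * (2 * gam * HA / tau)" .
  then have "1 - 1 / mu \<le> 2 * gam * HA / tau" by (rule mult_left_le_imp_le[OF _ r])
  then have "tau * (1 - 1 / mu) \<le> 2 * gam * HA" using tau by (simp add: field_simps)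
  then show ?thesis using HA by (simp add: field_simps)
qed

context wsetup
begin

lemma cc_pos: "cc > 0" unfolding cc_def using tau0 mu_gt1 by (simp add: field_simps)
lemma cc_le: "cc \<le> 1 / 2"
proof -
  have m: "1 - 1 / mu \<le> 1" "0 \<le> 1 - 1 / mu" using mu_gt1 by simp_all
  have "\<tau> * (1 - 1 / mu) \<le> 1" by (rule mult_le_one[OF tau1 m(2) m(1)])
  then show ?thesis unfolding cc_def by simp
qed

lemma H1: "1 \<le> j \<Longrightarrow> H 1 \<le> H j"
  using Hmono unfolding mono_on_def by auto

lemma Hmo: "1 \<le> j \<Longrightarrow> j \<le> j' \<Longrightarrow> H j \<le> H j'"
  using Hmono unfolding mono_on_def by auto

lemma Hp: "1 \<le> j \<Longrightarrow> 0 < H j" using Hpos by auto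

lemma Qmo: "0 \<le> x \<Longrightarrow> x \<le> y \<Longrightarrow> Q x \<le> Q y"
  using Qmono unfolding mono_on_def by auto

lemma Qarg_pos: "1 \<le> j \<Longrightarrow> 0 < cc / H j" using cc_pos Hp by simp

lemma Qp: "1 \<le> j \<Longrightarrow> 0 < Q (cc / H j)" using Qpos Qarg_pos by blast

lemma kN_ge1: "1 \<le> kN"
proof -
  define i0 where "i0 = (undefined :: 'i)"
  have "finite {i0} \<and> {i0} \<subseteq> {i0} \<and> card {i0} \<le> N \<and> card {i0} < D \<longrightarrow>
      norm (\<Sum>j\<in>{i0}. sm ((\<lambda>_. 1) j) (\<phi> j)) \<le> kN * norm (\<Sum>j\<in>{i0}. sm ((\<lambda>_. 1) j) (\<phi> j))"
    using spec[OF spec[OF spec[OF A1[unfolded property_A1_def], of "\<lambda>_. 1"], of "{i0}"], of "{i0}"] .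
  then have "norm (\<phi> i0) \<le> kN * norm (\<phi> i0)" using N1 ND by (simp add: nso_one[OF nso])
  moreover have "norm (\<phi> i0) > 0" using phinz by simp
  ultimately show ?thesis by simp
qed

lemma Qle1: assumes j: "1 \<le> j" shows "Q (cc / H j) \<le> 1"
proof -
  define i0 where "i0 = (undefined :: 'i)"
  define f0 where "f0 = \<phi> i0"
  have f0: "f0 \<noteq> 0" using phinz by (simp add: f0_def)
  have "\<exists>F. norming sm f0 F \<and> (\<forall>v\<in>kspan sm {}. F v = 0)"
    using NF[unfolded NFprop_def, rule_format, of f0 "{}"] f0 by (simp add: kspan_empty)
  then obtain F where F: "norming sm f0 F" by blast
  have "infdist f0 (kspan sm {\<phi> i0}) \<le> norm f0 * (1 - Q (norm (F (\<phi> i0))))"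
    using DQ[unfolded property_DQ_def, rule_format, OF f0 F] .
  moreover have "norm (F (\<phi> i0)) = norm f0" using F by (simp add: norming_def f0_def)
  ultimately have "0 \<le> norm f0 * (1 - Q (norm f0))" using infdist_nonneg by (metis order_trans)
  then have q1: "Q (norm f0) \<le> 1" using f0 by (simp add: zero_le_mult_iff)
  have "finite {i0} \<and> {i0} \<subseteq> {i0} \<and> {i0} \<noteq> {} \<and> card {i0} \<le> N \<and> card {i0} < D \<longrightarrow>
      (\<Sum>j\<in>{i0}. norm ((\<lambda>_. 1::'k) j)) \<le> H (card {i0}) * norm (\<Sum>j\<in>{i0}. sm ((\<lambda>_. 1) j) (\<phi> j))"
    using spec[OF spec[OF spec[OF A3[unfolded property_A3_def], of "\<lambda>_. 1"], of "{i0}"], of "{i0}"] .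
  then have h1: "1 \<le> H 1 * norm f0" using N1 ND by (simp add: nso_one[OF nso] f0_def)
  have H10: "0 < H 1" using Hp by simp
  have "cc / H j \<le> cc / H 1" using cc_pos H10 H1[OF j] by (simp add: frac_le)
  also have "\<dots> \<le> 1 / H 1" using cc_le H10 by (simp add: divide_right_mono)
  also have "\<dots> \<le> norm f0" using h1 H10 by (simp add: field_simps)
  finally have "Q (cc / H j) \<le> Q (norm f0)" using Qmo Qarg_pos[OF j] by simp
  then show ?thesis using q1 by simp
qed

lemma Gf_ge1: "1 \<le> j \<Longrightarrow> 1 \<le> Gf j"
  unfolding Gf_def using Qle1 Qp by simp

lemma Gf_pos: "1 \<le> j \<Longrightarrow> 0 < Gf j"
  using Gf_ge1 by (meson less_le_trans zero_less_one)

lemma Gf_mono: assumes "1 \<le> j" "j \<le> j'" shows "Gf j \<le> Gf j'"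
proof -
  have "cc / H j' \<le> cc / H j" using cc_pos Hp[OF assms(1)] Hmo[OF assms] by (simp add: frac_le)
  then have "Q (cc / H j') \<le> Q (cc / H j)" using Qmo Qarg_pos assms by (meson le_trans less_imp_le)
  then show ?thesis unfolding Gf_def using Qp assms by (simp add: frac_le)
qed

lemma qcG: "\<And>k. 1 \<le> k \<Longrightarrow> Gf k / real k \<le> Gf (k + 1) / real (k + 1)"
  using qc unfolding quasi_convex1_def Gf_def cc_def mu_def by simp

lemma qc_mono: assumes "1 \<le> x" "x \<le> y" shows "Gf x / real x \<le> Gf y / real y"
  using assms(2)
proof (induction y rule: dec_induct)
  case base then show ?case by simp
next
  case (step n)
  then show ?case using qcG[of n] assms(1) by simp
qed

lemma Gf_super: assumes "1 \<le> x" "1 \<le> y" shows "Gf x + Gf y \<le> Gf (x + y)"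
proof -
  have 1: "Gf x \<le> real x * (Gf (x + y) / real (x + y))"
    using qc_mono[of x "x + y"] assms by (simp add: field_simps)
  have 2: "Gf y \<le> real y * (Gf (x + y) / real (x + y))"
    using qc_mono[of y "x + y"] assms by (simp add: field_simps)
  have "Gf x + Gf y \<le> real x * (Gf (x + y) / real (x + y)) + real y * (Gf (x + y) / real (x + y))"
    using 1 2 by (rule add_mono)
  also have "\<dots> = (real x + real y) * (Gf (x + y) / real (x + y))" by (rule distrib_right[symmetric])
  also have "real x + real y = real (x + y)" by simp
  also have "real (x + y) * (Gf (x + y) / real (x + y)) = Gf (x + y)" using assms by simp
  finally show ?thesis .
qed

lemma Gf_dyadic: "(\<Sum>i<Suc m. Gf (2 ^ i)) \<le> 2 * Gf (2 ^ m)"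
proof -
  have "Gf (2 ^ i) \<le> 2 ^ i * (Gf (2 ^ m) / 2 ^ m)" if "i < Suc m" for i
  proof -
    have "(1::nat) \<le> 2 ^ i" by simp
    moreover have "(2::nat) ^ i \<le> 2 ^ m" using that by (simp add: power_increasing)
    ultimately have "Gf (2 ^ i) / real (2 ^ i) \<le> Gf (2 ^ m) / real (2 ^ m)" by (rule qc_mono)
    then show ?thesis by (simp add: field_simps)
  qed
  then have "(\<Sum>i<Suc m. Gf (2 ^ i)) \<le> (\<Sum>i<Suc m. 2 ^ i * (Gf (2 ^ m) / 2 ^ m))"
    by (intro sum_mono) auto
  also have "\<dots> = (\<Sum>i<Suc m. (2::real) ^ i) * (Gf (2 ^ m) / 2 ^ m)"
    by (rule sum_distrib_right[symmetric])
  also have "(\<Sum>i<Suc m. (2::real) ^ i) = 2 ^ Suc m - 1"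
    by (induction m) simp_all
  also have "(2 ^ Suc m - 1) * (Gf (2 ^ m) / 2 ^ m) \<le> 2 ^ Suc m * (Gf (2 ^ m) / 2 ^ m)"
    using Gf_pos[of "2 ^ m"] by (intro mult_right_mono) auto
  also have "\<dots> = 2 * Gf (2 ^ m)" by simp
  finally show ?thesis .
qed

lemma DL:
  assumes t: "N + t < D" and Y: "Y \<subseteq> T" and j: "1 \<le> j" "card (U t - Y) \<le> j"
    and big: "mu * (sig + norm (PS Y)) \<le> r t"
  shows "r (Suc t) \<le> (1 - Q (cc / H j)) * r t"
proof (cases "r t = 0")
  case True
  then show ?thesis using r_anti[of t "Suc t"] r_nn[of "Suc t"] by simp
next
  case False
  then have rpos: "r t > 0" using r_nn[of t] by simp
  define ft where "ft = f - G t f"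
  have ft0: "ft \<noteq> 0" using False by (simp add: r_def ft_def)
  have nV: "\<forall>v\<in>kspan sm (\<phi> ` Gam t). norm ft \<le> norm (ft + v)"
  proof
    fix v assume v: "v \<in> kspan sm (\<phi> ` Gam t)"
    have "G t f - v \<in> V t" using inv[of t] v unfolding V_def by (intro kspan_diff[OF nso]) auto
    then have "r t \<le> norm (f - (G t f - v))" by (rule r_le)
    then show "norm ft \<le> norm (ft + v)" by (simp add: ft_def r_def algebra_simps)
  qed
  obtain F where F: "norming sm ft F" and Fv: "\<forall>v\<in>V t. F v = 0"
    using NF[unfolded NFprop_def, rule_format, of ft "\<phi> ` Gam t"] ft0 nV by (auto simp: V_def)
  have kf: "kfunctional sm F" using F by (simp add: norming_def)
  have Fb: "norm (F x) \<le> norm x" for x by (rule norming_bound[OF nso F])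
  define jj where "jj = ix (Suc t)"
  define gam where "gam = norm (F (\<phi> jj))"
  have greedy: "\<tau> * norm (F (\<phi> i)) \<le> gam" for i
    using ixp[rule_format, of t] ft0 F unfolding ft_def gam_def jj_def by auto
  define S0 where "S0 = T - Y"
  define A where "A = S0 - Gam t"
  have AU: "A = U t - Y" by (auto simp: A_def S0_def U_def)
  have S0T: "S0 \<subseteq> T" by (auto simp: S0_def)
  have finS0: "finite S0" using S0T Tfin finite_subset by auto
  have finA: "finite A" using finS0 by (simp add: A_def)
  define e where "e = sig + norm (PS Y)"
  have e0: "0 \<le> e" by (simp add: e_def sig_def)
  have PhiS: "Phi = PS Y + PS S0" unfolding Phi_def S0_def using PS_split[OF Y Tfin] .
  have fPsi: "norm (f - PS S0) \<le> e"
  proof -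
    have "f - PS S0 = (f - Phi) + PS Y" using PhiS by simp
    then show ?thesis unfolding e_def sig_def using norm_triangle_ineq by metis
  qed
  have S0s: "PS S0 = PS (S0 \<inter> Gam t) + PS A"
    using PS_split[of "S0 \<inter> Gam t" S0] finS0 by (simp add: A_def Diff_Int)
  have F1: "F (PS (S0 \<inter> Gam t)) = 0" using Fv PS_in_V[of "S0 \<inter> Gam t" t] by auto
  have FG: "F (G t f) = 0" using Fv inv by auto
  have Fft: "F ft = F (f - PS S0) + F (PS A)"
  proof -
    have "F ft = F f - F (G t f)" unfolding ft_def by (rule kfun_diff[OF kf])
    also have "\<dots> = F f" using FG by simp
    also have "f = (f - PS S0) + (PS (S0 \<inter> Gam t) + PS A)" using S0s by simp
    also have "F \<dots> = F (f - PS S0) + (F (PS (S0 \<inter> Gam t)) + F (PS A))"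
      by (simp add: kfun_add[OF kf])
    finally show ?thesis using F1 by simp
  qed
  have nFft: "norm (F ft) = r t" using F by (simp add: norming_def r_def ft_def)
  have sumb: "norm (F (PS A)) \<le> (gam / \<tau>) * (\<Sum>i\<in>A. norm (a i))"
  proof -
    have "F (PS A) = (\<Sum>i\<in>A. a i * F (\<phi> i))" unfolding PS_def by (rule kfun_sum[OF kf])
    then have "norm (F (PS A)) \<le> (\<Sum>i\<in>A. norm (a i * F (\<phi> i)))" by (simp add: norm_sum)
    also have "\<dots> \<le> (\<Sum>i\<in>A. norm (a i) * (gam / \<tau>))"
    proof (rule sum_mono)
      fix i assume "i \<in> A"
      have "norm (F (\<phi> i)) \<le> gam / \<tau>" using greedy[of i] tau0 by (simp add: field_simps)
      then have "norm (a i) * norm (F (\<phi> i)) \<le> norm (a i) * (gam / \<tau>)"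
        by (rule mult_left_mono) simp
      then show "norm (a i * F (\<phi> i)) \<le> norm (a i) * (gam / \<tau>)"
        by (simp only: norm_mult)
    qed
    also have "\<dots> = (gam / \<tau>) * (\<Sum>i\<in>A. norm (a i))" by (simp add: sum_distrib_left mult.commute)
    finally show ?thesis .
  qed
  have rle: "r t \<le> e + (gam / \<tau>) * (\<Sum>i\<in>A. norm (a i))"
  proof -
    have "r t \<le> norm (F (f - PS S0)) + norm (F (PS A))" using nFft Fft norm_triangle_ineq by metis
    also have "norm (F (f - PS S0)) \<le> e" using Fb[of "f - PS S0"] fPsi by simp
    finally show ?thesis using sumb by simp
  qed
  have me: "mu * e \<le> r t" using big by (simp add: e_def)
  have Ane: "A \<noteq> {}"
  proof
    assume "A = {}"
    then have re: "r t \<le> e" using rle by simp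
    then have "mu * e \<le> 1 * e" using me by simp
    then have "(mu - 1) * e \<le> 0" by (simp add: algebra_simps)
    then have "e \<le> 0" using mu_gt1 by (simp add: mult_le_0_iff)
    then show False using re rpos by simp
  qed
  obtain B b where B: "finite B" "S0 \<subseteq> B" "card B \<le> N + t" "\<forall>i\<in>S0 - Gam t. b i = a i"
    "(\<Sum>i\<in>B. sm (b i) (\<phi> i)) = PS S0 - G t f"
    using comb[OF S0T, of t] by blast
  have AT: "A \<subseteq> T" using S0T by (auto simp: A_def)
  have cA: "card A \<le> N" using card_mono[OF Tfin AT] Tcard by simp
  have AB: "A \<subseteq> B" using B(2) by (auto simp: A_def)
  have h: "finite B \<and> A \<subseteq> B \<and> A \<noteq> {} \<and> card A \<le> N \<and> card B < D \<longrightarrow>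
      (\<Sum>j\<in>A. norm (b j)) \<le> H (card A) * norm (\<Sum>j\<in>B. sm (b j) (\<phi> j))"
    using spec[OF spec[OF spec[OF A3[unfolded property_A3_def], of b], of A], of B] .
  have "(\<Sum>j\<in>A. norm (b j)) \<le> H (card A) * norm (\<Sum>j\<in>B. sm (b j) (\<phi> j))"
    using h B(1,3) AB Ane cA t by auto
  moreover have "(\<Sum>j\<in>A. norm (b j)) = (\<Sum>j\<in>A. norm (a j))"
    using B(4) by (intro sum.cong) (auto simp: A_def)
  ultimately have l3: "(\<Sum>j\<in>A. norm (a j)) \<le> H (card A) * norm (PS S0 - G t f)" using B(5) by simp
  have cA1: "1 \<le> card A" using Ane finA by (simp add: Suc_le_eq card_gt_0_iff)
  have HA: "0 < H (card A)" using Hp[OF cA1] .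
  have "norm (PS S0 - G t f) \<le> e + r t" using norm_PhiG[of S0 t] fPsi by simp
  then have l3': "(\<Sum>j\<in>A. norm (a j)) \<le> H (card A) * (e + r t)"
    using l3 HA by (meson mult_left_mono less_imp_le order_trans)
  have gam0: "0 \<le> gam" by (simp add: gam_def)
  have "r t \<le> e + (gam / \<tau>) * (H (card A) * (e + r t))"
    using rle l3' gam0 tau0 by (meson add_left_mono divide_nonneg_pos mult_left_mono order_trans)
  then have main: "r t \<le> e + (gam / \<tau>) * H (card A) * (e + r t)" by (simp add: mult.assoc)
  have "\<tau> / 2 * (1 - 1 / mu) / H (card A) \<le> gam"
    by (rule dl_alg[OF rpos mu_gt1 tau0 HA gam0 e0 me main])
  then have g1: "cc / H (card A) \<le> gam" by (simp add: cc_def)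
  have "cc / H j \<le> cc / H (card A)" using cc_pos HA Hmo[OF cA1] j(2) AU by (simp add: frac_le)
  then have g2: "cc / H j \<le> gam" using g1 by simp
  have Qg: "Q (cc / H j) \<le> Q gam" using Qmo Qarg_pos[OF j(1)] g2 by simp
  define K where "K = kspan sm {\<phi> jj}"
  have K0: "0 \<in> K" unfolding K_def by (rule kspan_zero)
  have rK: "r (Suc t) \<le> infdist ft K"
  proof -
    have Kne: "K \<noteq> {}" using K0 by auto
    have hw: "r (Suc t) \<le> dist ft w" if w: "w \<in> K" for w
    proof -
      have sub: "{\<phi> (ix (Suc t))} \<subseteq> \<phi> ` ix ` {1..Suc t}" by auto
      have "w \<in> V (Suc t)" using w kspan_mono[OF sub] unfolding K_def V_def Gam_def jj_def by blast
      moreover have "G t f \<in> V (Suc t)" using inv[of t] V_mono[of t "Suc t"] by auto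
      ultimately have "G t f + w \<in> V (Suc t)" unfolding V_def by (intro kspan_add[OF nso])
      then have "r (Suc t) \<le> norm (f - (G t f + w))" by (rule r_le)
      then show ?thesis by (simp add: dist_norm ft_def algebra_simps)
    qed
    show ?thesis unfolding infdist_notempty[OF Kne] by (rule cINF_greatest[OF Kne]) (rule hw)
  qed
  have "infdist ft K \<le> norm ft * (1 - Q (norm (F (\<phi> jj))))"
    unfolding K_def using DQ[unfolded property_DQ_def, rule_format, OF ft0 F] .
  then have "r (Suc t) \<le> r t * (1 - Q gam)" using rK by (simp add: r_def ft_def gam_def)
  also have "\<dots> \<le> r t * (1 - Q (cc / H j))" using Qg r_nn[of t] by (intro mult_left_mono) auto
  finally show ?thesis by (simp add: mult.commute)
qed

end


lemma max_aux: "0 \<le> q \<Longrightarrow> q \<le> 1 \<Longrightarrow> 0 \<le> (th::real) \<Longrightarrow> q * max th X \<le> max th (q * X)"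
proof -
  assume q: "0 \<le> q" "q \<le> 1" and th: "0 \<le> th"
  show ?thesis
  proof (cases "th \<le> X")
    case True
    then have "q * max th X = q * X" by simp
    also have "\<dots> \<le> max th (q * X)" by (rule max.cobounded2)
    finally show ?thesis .
  next
    case False
    then have "q * max th X = q * th" by simp
    also have "\<dots> \<le> th" using q th by (simp add: mult_left_le_one_le)
    finally show ?thesis by simp
  qed
qed

lemma final_alg:
  fixes mu sig tp tg eps kN qL r0 rr :: real
  assumes mu: "mu > 1" and sig: "sig \<ge> 0" and tp: "tp \<ge> 0" and tg: "tg \<le> eps * tp"
    and eps: "0 < eps" "eps \<le> 1" and kN: "kN > 0" and ek: "eps * (1 + mu * mu) * kN = (mu - 1) / 2"
    and qL: "0 \<le> qL" "qL \<le> eps" and r0: "0 \<le> r0" "r0 \<le> mu * (sig + tp)"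
    and rr: "rr \<le> max (mu * (sig + tg)) (qL * r0)" and big: "mu * mu * sig < rr"
  shows "rr < tp / kN - sig"
proof -
  have A: "(mu - 1) * sig < eps * tp \<and> rr \<le> mu * sig + mu * (eps * tp)"
  proof (cases "mu * (sig + tg) \<ge> qL * r0")
    case True
    then have r1: "rr \<le> mu * sig + mu * tg" using rr by (simp add: algebra_simps)
    then have "mu * ((mu - 1) * sig) < mu * tg" using big by (simp add: algebra_simps)
    then have "(mu - 1) * sig < tg" using mu by simp
    moreover have "mu * tg \<le> mu * (eps * tp)" using tg mu by simp
    ultimately show ?thesis using tg r1 by simp
  next
    case False
    then have "rr \<le> qL * r0" using rr by simp
    also have "\<dots> \<le> eps * r0" using qL r0 by (simp add: mult_right_mono)
    also have "\<dots> \<le> eps * (mu * (sig + tp))" using r0 eps by simp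
    finally have r1: "rr \<le> eps * mu * sig + mu * (eps * tp)" by (simp add: algebra_simps)
    have "eps * (mu * sig) \<le> mu * sig" by (rule mult_left_le_one_le) (use eps mu sig in auto)
    then have "eps * mu * sig \<le> mu * sig" by (simp add: mult.assoc)
    then have r2: "rr \<le> mu * sig + mu * (eps * tp)" using r1 by simp
    have "mu * ((mu - eps) * sig) < mu * (eps * tp)" using big r1 by (simp add: algebra_simps)
    then have "(mu - eps) * sig < eps * tp" using mu by simp
    moreover have "(mu - 1) * sig \<le> (mu - eps) * sig" using eps sig by (simp add: mult_right_mono)
    ultimately show ?thesis using r2 by simp
  qed
  have "(mu - 1) * (rr + sig) \<le> (mu - 1) * (mu * sig + mu * (eps * tp) + sig)"
    using A mu by simp
  also have "\<dots> = (mu + 1) * ((mu - 1) * sig) + (mu - 1) * mu * (eps * tp)" by (simp add: algebra_simps)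
  also have "\<dots> < (mu + 1) * (eps * tp) + (mu - 1) * mu * (eps * tp)"
    using A mu by simp
  also have "\<dots> = eps * (1 + mu * mu) * tp" by (simp add: algebra_simps)
  also have "\<dots> = (eps * (1 + mu * mu) * kN) * tp / kN" using kN by simp
  also have "\<dots> = (mu - 1) * (tp / (2 * kN))" unfolding ek by simp
  finally have "(mu - 1) * (rr + sig) < (mu - 1) * (tp / (2 * kN))" .
  then have "rr + sig < tp / (2 * kN)" by (rule mult_left_less_imp_less) (use mu in simp)
  also have "\<dots> \<le> tp / kN" using tp kN by (simp add: frac_le)
  finally show ?thesis by simp
qed

lemma floor_nat_le: "0 \<le> (x::real) \<Longrightarrow> real (nat \<lfloor>x\<rfloor>) \<le> x"
  by (simp add: of_nat_nat)
lemma floor_nat_gt: "0 \<le> (x::real) \<Longrightarrow> x - 1 < real (nat \<lfloor>x\<rfloor>)"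
  by (simp add: of_nat_nat)
lemma ceil_nat_le: "0 \<le> (x::real) \<Longrightarrow> real (nat \<lceil>x\<rceil>) \<le> x + 1"
  by (simp add: of_nat_nat)

context wsetup
begin

definition "eps = 4 / Lam"
definition "Lst j = nat \<lceil>Gf j * ln (Lam / 4)\<rceil>"
definition "qf j = 1 - Q (cc / H j)"
definition "K n = (if n = 0 then 0 else 2 * ln Lam * Gf (2 * n))"
definition "tauf t0 j = Min ((\<lambda>S. norm (PS (U t0 - S))) ` {S. S \<subseteq> U t0 \<and> card S \<le> j})"
definition "prv i = (if i = 0 then 0 else 2 ^ (i - 1) :: nat)"

lemma Lam_ge8: "8 \<le> Lam"
proof -
  have m: "mu - 1 > 0" using mu_gt1 by simp
  have "mu * 1 \<le> mu * mu" using mu_gt1 by (intro mult_left_mono) auto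
  then have "mu - 1 \<le> 1 + lam" using lam_mu by simp
  then have "1 \<le> (1 + lam) / (mu - 1)" using m by (simp add: field_simps)
  moreover have "1 \<le> kN" by (rule kN_ge1)
  ultimately have "1 \<le> (1 + lam) / (mu - 1) * kN" by (metis mult_mono' mult_1 zero_le_one)
  then have "8 * 1 \<le> 8 * ((1 + lam) / (mu - 1) * kN)" by (intro mult_left_mono) auto
  then show ?thesis unfolding Lam_def by (simp add: field_simps)
qed

lemma Lam_pos: "0 < Lam" using Lam_ge8 by simp

lemma eps_pos: "0 < eps" unfolding eps_def using Lam_pos by simp
lemma eps_le: "eps \<le> 1" unfolding eps_def using Lam_ge8 by simp
lemma eps_aux: "(A::real) > 0 \<Longrightarrow> k > 0 \<Longrightarrow> B > 0 \<Longrightarrow> 4 / (8 * A * k / B) * A * k = B / 2"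
  by (simp add: field_simps)

lemma eps_k: "eps * (1 + mu * mu) * kN = (mu - 1) / 2"
proof -
  have m: "mu - 1 > 0" using mu_gt1 by simp
  have l: "1 + lam > 0" using lam by simp
  have "eps * (1 + lam) * kN = (mu - 1) / 2"
    unfolding eps_def Lam_def by (rule eps_aux[OF l kN0 m])
  then show ?thesis using lam_mu by simp
qed

lemma ln4: "1 \<le> ln (4::real)"
proof -
  have "exp 1 \<le> (4::real)" using exp_le by simp
  then have "ln (exp 1) \<le> ln (4::real)" by (subst ln_le_cancel_iff) auto
  then show ?thesis by simp
qed

lemma lnLam4: "0 \<le> ln (Lam / 4)" using Lam_ge8 by simp

lemma lnLam: "0 \<le> ln Lam" using Lam_ge8 by simp

lemma qf_range: "1 \<le> j \<Longrightarrow> 0 \<le> qf j \<and> qf j \<le> 1"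
  unfolding qf_def using Qle1 Qp by (simp add: less_imp_le)

lemma qf_pow: assumes j: "1 \<le> j" shows "qf j ^ Lst j \<le> eps"
proof -
  define x where "x = Q (cc / H j)"
  have x: "0 < x" "x \<le> 1" using Qp[OF j] Qle1[OF j] by (simp_all add: x_def)
  have Gx: "Gf j = 1 / x" by (simp add: Gf_def x_def)
  have "qf j ^ Lst j = (1 - x) ^ Lst j" by (simp add: qf_def x_def)
  also have "\<dots> \<le> exp (- x) ^ Lst j"
    using x exp_ge_add_one_self[of "-x"] by (intro power_mono) auto
  also have "\<dots> = exp (real (Lst j) * (- x))" by (rule exp_of_nat_mult[symmetric])
  also have "\<dots> \<le> exp (- ln (Lam / 4))"
  proof -
    have "Gf j * ln (Lam / 4) \<le> real (Lst j)" unfolding Lst_def by (rule real_nat_ceiling_ge)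
    then have "x * (Gf j * ln (Lam / 4)) \<le> x * real (Lst j)" using x by (intro mult_left_mono) auto
    then have "ln (Lam / 4) \<le> x * real (Lst j)" using x by (simp add: Gx)
    then show ?thesis by (simp add: mult.commute)
  qed
  also have "\<dots> = eps" using Lam_pos by (simp add: exp_minus eps_def)
  finally show ?thesis .
qed

lemma Lst_le: assumes j: "1 \<le> j" shows "real (Lst j) \<le> Gf j * ln Lam"
proof -
  have y0: "0 \<le> Gf j * ln (Lam / 4)" using Gf_pos[OF j] lnLam4 by simp
  have "real (Lst j) \<le> Gf j * ln (Lam / 4) + 1" unfolding Lst_def using y0 by (rule ceil_nat_le)
  also have "ln (Lam / 4) = ln Lam - ln 4" using Lam_pos by (simp add: ln_div)
  also have "Gf j * (ln Lam - ln 4) + 1 \<le> Gf j * ln Lam"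
  proof -
    have "1 \<le> Gf j * ln 4" using Gf_ge1[OF j] ln4 by (metis mult_mono' mult_1 zero_le_one)
    then show ?thesis by (simp add: algebra_simps)
  qed
  finally show ?thesis .
qed

lemma K_nn: "0 \<le> K n"
proof (cases "n = 0")
  case True then show ?thesis by (simp add: K_def)
next
  case False
  then have "0 < Gf (2 * n)" using Gf_pos[of "2 * n"] by simp
  then show ?thesis using False lnLam by (simp add: K_def)
qed

lemma K_mono: "n \<le> m \<Longrightarrow> K n \<le> K m"
  unfolding K_def using lnLam Gf_mono[of "2 * n" "2 * m"] Gf_pos[of "2 * m"]
  by (auto intro: mult_left_mono)

lemma K_super: "K x + K y \<le> K (x + y)"
proof (cases "x = 0 \<or> y = 0")
  case True then show ?thesis by (auto simp: K_def)
next
  case False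
  then have "1 \<le> 2 * x" "1 \<le> 2 * y" by auto
  then have g: "Gf (2 * x) + Gf (2 * y) \<le> Gf (2 * x + 2 * y)" by (rule Gf_super)
  have e: "2 * x + 2 * y = 2 * (x + y)" by simp
  have "K x + K y = 2 * ln Lam * (Gf (2 * x) + Gf (2 * y))" using False by (simp add: K_def distrib_left)
  also have "\<dots> \<le> 2 * ln Lam * Gf (2 * (x + y))"
    using g lnLam unfolding e by (intro mult_left_mono) auto
  also have "\<dots> = K (x + y)" using False by (simp add: K_def)
  finally show ?thesis .
qed

lemma phiN_eq: "8 * ln (8 * (1 + lam) * kN / (sqrt lam - 1))
            * (1 / Q ((\<tau> / 2) * (1 - 1 / sqrt lam) / H (2 * N))) = 8 * ln Lam * Gf (2 * N)"
  by (simp add: Lam_def Gf_def cc_def mu_def)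

lemma M_bound: "real M \<le> 8 * ln Lam * Gf (2 * N)"
proof -
  have "0 \<le> 8 * ln Lam * Gf (2 * N)" using lnLam Gf_pos[of "2 * N"] N1 by simp
  then show ?thesis unfolding M_def by (rule floor_nat_le)
qed

lemma NMD: "N + M < D"
  using budget M_bound unfolding phiN_eq by linarith

lemma KN_M: "K N \<le> real M"
proof -
  have g: "1 \<le> Gf (2 * N)" using Gf_ge1 N1 by simp
  have l: "1 \<le> ln Lam"
  proof -
    have "ln 4 \<le> ln Lam" using Lam_ge8 by (subst ln_le_cancel_iff) auto
    then show ?thesis using ln4 by simp
  qed
  have "1 * 1 \<le> ln Lam * Gf (2 * N)" using l g by (intro mult_mono) auto
  then have "K N + 1 \<le> 8 * ln Lam * Gf (2 * N)" using N1 by (simp add: K_def)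
  moreover have "8 * ln Lam * Gf (2 * N) - 1 < real M"
    unfolding M_def using lnLam Gf_pos[of "2 * N"] N1 by (intro floor_nat_gt) simp
  ultimately show ?thesis by simp
qed

end


context wsetup
begin

lemma iter_decay:
  assumes th: "0 \<le> \<theta>" and q: "0 \<le> q" "q \<le> 1"
  shows "(\<And>t. s \<le> t \<Longrightarrow> t < s + L \<Longrightarrow> \<theta> \<le> r t \<Longrightarrow> r (Suc t) \<le> q * r t)
    \<Longrightarrow> r (s + L) \<le> max \<theta> (q ^ L * r s)"
proof (induction L)
  case 0 show ?case by simp
next
  case (Suc L)
  have IH: "r (s + L) \<le> max \<theta> (q ^ L * r s)"
  proof (rule Suc.IH)
    fix t assume "s \<le> t" "t < s + L" "\<theta> \<le> r t"
    then show "r (Suc t) \<le> q * r t" using Suc.prems by simp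
  qed
  show ?case
  proof (cases "\<theta> \<le> r (s + L)")
    case True
    have "r (s + Suc L) \<le> q * r (s + L)" using Suc.prems[of "s + L"] True by simp
    also have "\<dots> \<le> q * max \<theta> (q ^ L * r s)" using IH q by (intro mult_left_mono) auto
    also have "\<dots> \<le> max \<theta> (q * (q ^ L * r s))" by (rule max_aux[OF q th])
    also have "\<dots> = max \<theta> (q ^ Suc L * r s)" by (simp add: mult.assoc)
    finally show ?thesis .
  next
    case False
    have "r (s + Suc L) \<le> r (s + L)" by (rule r_anti) simp
    then show ?thesis using False by simp
  qed
qed

lemma finU: "finite (U t)" using U_sub Tfin finite_subset by blast

lemma tauf_fin: "finite {S. S \<subseteq> U t0 \<and> card S \<le> j}"
  by (rule finite_subset[of _ "Pow (U t0)"]) (use finU in auto)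

lemma tauf_ne: "{S. S \<subseteq> U t0 \<and> card S \<le> j} \<noteq> {}"
  by (metis (mono_tags, lifting) bot.extremum card.empty empty_iff mem_Collect_eq zero_le)

lemma tauf_ex: "\<exists>S. S \<subseteq> U t0 \<and> card S \<le> j \<and> tauf t0 j = norm (PS (U t0 - S))"
proof -
  have "tauf t0 j \<in> (\<lambda>S. norm (PS (U t0 - S))) ` {S. S \<subseteq> U t0 \<and> card S \<le> j}"
    unfolding tauf_def by (rule Min_in) (use tauf_fin tauf_ne in auto)
  then show ?thesis by auto
qed

lemma tauf_le: "S \<subseteq> U t0 \<Longrightarrow> card S \<le> j \<Longrightarrow> tauf t0 j \<le> norm (PS (U t0 - S))"
  unfolding tauf_def by (rule Min_le) (use tauf_fin in auto)

lemma tauf_nn: "0 \<le> tauf t0 j" using tauf_ex[of t0 j] by auto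

lemma tauf_big: assumes "card (U t0) \<le> j" shows "tauf t0 j = 0"
proof -
  have "tauf t0 j \<le> norm (PS (U t0 - U t0))" by (rule tauf_le) (use assms in auto)
  then show ?thesis using tauf_nn[of t0 j] by (simp add: PS_def)
qed

lemma tauf_0: "tauf t0 0 = norm (PS (U t0))"
proof -
  obtain S where S: "S \<subseteq> U t0" "card S \<le> 0" "tauf t0 0 = norm (PS (U t0 - S))" using tauf_ex by blast
  have "finite S" using S(1) finU finite_subset by blast
  then have "S = {}" using S(2) by simp
  then show ?thesis using S(3) by simp
qed

lemma FC:
  assumes "t0 \<le> t" "N + t < D" "card (U t0 - U t) \<le> j"
  shows "tauf t0 j \<le> kN * (r t + sig)"
proof -
  have sub: "U t \<subseteq> U t0" by (rule U_mono[OF assms(1)])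
  have "tauf t0 j \<le> norm (PS (U t0 - (U t0 - U t)))" by (rule tauf_le) (use assms in auto)
  also have "U t0 - (U t0 - U t) = U t" using sub by blast
  also have "norm (PS (U t)) \<le> kN * (r t + sig)" by (rule LB[OF assms(2)]) simp
  finally show ?thesis .
qed

lemma sig_nn: "0 \<le> sig" by (simp add: sig_def)

end


context wsetup
begin

lemma phase:
  assumes n1: "1 \<le> card (U t0)" and tb: "real t0 + K (card (U t0)) \<le> real M" and big: "lam * sig < r t0"
  shows "\<exists>t1 p. t0 \<le> t1 \<and> t1 \<le> M \<and> (r t1 \<le> lam * sig \<or>
      (1 \<le> p \<and> card (U t1) + p \<le> card (U t0) \<and> real t1 \<le> real t0 + K p))"
proof -
  define n where "n = card (U t0)"
  have n1': "1 \<le> n" using n1 by (simp add: n_def)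
  define tf where "tf = tauf t0"
  define gap where "gap i \<longleftrightarrow> tf (2 ^ i) \<le> eps * tf (prv i)" for i
  have gapn: "gap i" if "n \<le> 2 ^ i" for i
  proof -
    have "tf (2 ^ i) = 0" unfolding tf_def by (rule tauf_big) (use that in \<open>simp add: n_def\<close>)
    then show ?thesis unfolding gap_def using eps_pos tauf_nn[of t0] by (simp add: tf_def)
  qed
  have nn: "n \<le> 2 ^ n" by (simp add: less_imp_le)
  define istar where "istar = (LEAST i. gap i)"
  have gs: "gap istar" unfolding istar_def by (rule LeastI[of gap n]) (rule gapn[OF nn])
  have nogap: "\<not> gap i" if "i < istar" for i using that unfolding istar_def by (rule not_less_Least)
  define i0 where "i0 = (LEAST i. n \<le> 2 ^ i)"
  have i0: "n \<le> 2 ^ i0" unfolding i0_def by (rule LeastI[of _ n]) (rule nn)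
  have si0: "istar \<le> i0" unfolding istar_def by (rule Least_le) (rule gapn[OF i0])
  have "2 ^ i0 < 2 * n"
  proof (cases i0)
    case 0 then show ?thesis using n1' by simp
  next
    case (Suc k)
    have "\<not> n \<le> 2 ^ k" unfolding i0_def by (rule not_less_Least) (simp add: Suc i0_def[symmetric])
    then show ?thesis using Suc by simp
  qed
  moreover have "(2::nat) ^ istar \<le> 2 ^ i0" by (rule power_increasing[OF si0]) simp
  ultimately have p2: "2 ^ istar \<le> 2 * n" by linarith
  define ts where "ts i = t0 + (\<Sum>i'<i. Lst (2 ^ i'))" for i
  have tsS: "ts (Suc i) = ts i + Lst (2 ^ i)" for i by (simp add: ts_def)
  have tsmono: "ts i \<le> ts j" if "i \<le> j" for i j
    unfolding ts_def using that by (intro add_left_mono sum_mono2) auto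
  have ts0: "ts 0 = t0" by (simp add: ts_def)
  define T1 where "T1 = ts (Suc istar)"
  have cost: "real T1 \<le> real t0 + 2 * ln Lam * Gf (2 ^ istar)"
  proof -
    have "real T1 = real t0 + (\<Sum>i'<Suc istar. real (Lst (2 ^ i')))" by (simp add: T1_def ts_def)
    also have "(\<Sum>i'<Suc istar. real (Lst (2 ^ i'))) \<le> (\<Sum>i'<Suc istar. Gf (2 ^ i') * ln Lam)"
      by (intro sum_mono Lst_le) simp
    also have "\<dots> = (\<Sum>i'<Suc istar. Gf (2 ^ i')) * ln Lam" by (rule sum_distrib_right[symmetric])
    also have "\<dots> \<le> (2 * Gf (2 ^ istar)) * ln Lam" using Gf_dyadic lnLam by (intro mult_right_mono) auto
    finally show ?thesis by (simp add: mult_ac)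
  qed
  have costn: "2 * ln Lam * Gf (2 ^ istar) \<le> K n"
  proof -
    have "Gf (2 ^ istar) \<le> Gf (2 * n)" using p2 by (intro Gf_mono) simp_all
    then have "2 * ln Lam * Gf (2 ^ istar) \<le> 2 * ln Lam * Gf (2 * n)" using lnLam by (intro mult_left_mono) auto
    then show ?thesis using n1' by (simp add: K_def)
  qed
  have T1M: "T1 \<le> M" using cost costn tb by (simp add: n_def)
  have timeok: "N + t < D" if "t \<le> T1" for t using that T1M NMD by simp
  have stage: "r (ts (Suc i)) \<le> max (mu * (sig + tf (2 ^ i))) (qf (2 ^ i) ^ Lst (2 ^ i) * r (ts i))"
    if i: "i \<le> istar" for i
  proof -
    obtain S where S: "S \<subseteq> U t0" "card S \<le> 2 ^ i" "tf (2 ^ i) = norm (PS (U t0 - S))"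
      using tauf_ex[of t0 "2 ^ i"] unfolding tf_def by blast
    have finS: "finite S" using S(1) finU finite_subset by blast
    define Y where "Y = U t0 - S"
    have YT: "Y \<subseteq> T" using U_sub by (auto simp: Y_def)
    have th: "0 \<le> mu * (sig + tf (2 ^ i))" using mu_gt1 sig_nn tauf_nn by (simp add: tf_def)
    have q: "0 \<le> qf (2 ^ i)" "qf (2 ^ i) \<le> 1" using qf_range[of "2 ^ i"] by simp_all
    have "r (ts i + Lst (2 ^ i)) \<le> max (mu * (sig + tf (2 ^ i))) (qf (2 ^ i) ^ Lst (2 ^ i) * r (ts i))"
    proof (rule iter_decay[OF th q])
      fix t assume t: "ts i \<le> t" "t < ts i + Lst (2 ^ i)" "mu * (sig + tf (2 ^ i)) \<le> r t"
      have tT1: "t \<le> T1" using t(2) tsmono[of "Suc i" "Suc istar"] i by (simp add: T1_def tsS)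
      have t0t: "t0 \<le> t" using t(1) tsmono[of 0 i] ts0 by simp
      have "U t - Y \<subseteq> S" using U_mono[OF t0t] by (auto simp: Y_def)
      then have cY: "card (U t - Y) \<le> 2 ^ i" using card_mono[OF finS] S(2) by (meson le_trans)
      have "r (Suc t) \<le> (1 - Q (cc / H (2 ^ i))) * r t"
        by (rule DL[OF timeok[OF tT1] YT _ cY]) (use t(3) S(3) in \<open>simp_all add: Y_def\<close>)
      then show "r (Suc t) \<le> qf (2 ^ i) * r t" by (simp add: qf_def)
    qed
    then show ?thesis by (simp add: tsS)
  qed
  have SC: "r (ts i) \<le> lam * sig \<or> r (ts i) \<le> mu * (sig + tf (prv i))" if "i \<le> istar" for i
    using that
  proof (induction i)
    case 0
    have "r t0 \<le> sig + tf 0" using UB[of t0] tauf_0[of t0] by (simp add: tf_def)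
    also have "\<dots> \<le> mu * (sig + tf 0)" using mu_gt1 sig_nn tauf_nn[of t0 0]
      by (simp add: tf_def mult_le_cancel_right1)
    finally show ?case by (simp add: ts0 prv_def)
  next
    case (Suc i)
    have ii: "i < istar" "i \<le> istar" using Suc.prems by simp_all
    have ng: "eps * tf (prv i) < tf (2 ^ i)" using nogap[OF ii(1)] by (simp add: gap_def)
    have st: "r (ts (Suc i)) \<le> max (mu * (sig + tf (2 ^ i))) (qf (2 ^ i) ^ Lst (2 ^ i) * r (ts i))"
      by (rule stage[OF ii(2)])
    have prvS: "prv (Suc i) = 2 ^ i" by (simp add: prv_def)
    show ?case
    proof (cases "r (ts i) \<le> lam * sig")
      case True
      have "r (ts (Suc i)) \<le> r (ts i)" by (rule r_anti) (simp add: tsS)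
      then show ?thesis using True by simp
    next
      case False
      then have ri: "r (ts i) \<le> mu * (sig + tf (prv i))" using Suc.IH[OF ii(2)] by simp
      have qp: "qf (2 ^ i) ^ Lst (2 ^ i) \<le> eps" by (rule qf_pow) simp
      have qn: "0 \<le> qf (2 ^ i) ^ Lst (2 ^ i)" using qf_range[of "2 ^ i"] by simp
      have "qf (2 ^ i) ^ Lst (2 ^ i) * r (ts i) \<le> eps * (mu * (sig + tf (prv i)))"
        using qp qn ri r_nn[of "ts i"] eps_pos by (intro mult_mono) auto
      also have "\<dots> = mu * (eps * sig + eps * tf (prv i))" by (simp add: algebra_simps)
      also have "\<dots> \<le> mu * (sig + tf (2 ^ i))"
      proof -
        have "eps * sig \<le> sig" by (rule mult_left_le_one_le[OF sig_nn]) (use eps_pos eps_le in auto)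
        then show ?thesis using ng mu_gt1 by (intro mult_left_mono) auto
      qed
      finally have "r (ts (Suc i)) \<le> mu * (sig + tf (2 ^ i))" using st by simp
      then show ?thesis by (simp add: prvS)
    qed
  qed
  have t0T1: "t0 \<le> T1" using tsmono[of 0 "Suc istar"] ts0 by (simp add: T1_def)
  show ?thesis
  proof (cases "r (ts istar) \<le> lam * sig")
    case True
    have "r T1 \<le> r (ts istar)" by (rule r_anti) (simp add: T1_def tsS)
    then have "r T1 \<le> lam * sig" using True by simp
    then show ?thesis using t0T1 T1M by (intro exI[of _ T1] exI[of _ 0]) simp
  next
    case False
    then have r0: "r (ts istar) \<le> mu * (sig + tf (prv istar))" using SC[of istar] by simp
    have st: "r T1 \<le> max (mu * (sig + tf (2 ^ istar))) (qf (2 ^ istar) ^ Lst (2 ^ istar) * r (ts istar))"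
      unfolding T1_def by (rule stage) simp
    show ?thesis
    proof (cases "r T1 \<le> lam * sig")
      case True then show ?thesis using t0T1 T1M by (intro exI[of _ T1] exI[of _ 0]) simp
    next
      case False
      have lt: "r T1 < tf (prv istar) / kN - sig"
      proof (rule final_alg[OF mu_gt1 sig_nn tauf_nn[of t0 "prv istar", folded tf_def] _ eps_pos eps_le kN0 eps_k])
        show "tf (2 ^ istar) \<le> eps * tf (prv istar)" using gs by (simp add: gap_def)
        show "0 \<le> qf (2 ^ istar) ^ Lst (2 ^ istar)" using qf_range[of "2 ^ istar"] by simp
        show "qf (2 ^ istar) ^ Lst (2 ^ istar) \<le> eps" by (rule qf_pow) simp
        show "0 \<le> r (ts istar)" by (rule r_nn)
        show "r (ts istar) \<le> mu * (sig + tf (prv istar))" by (rule r0)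
        show "r T1 \<le> max (mu * (sig + tf (2 ^ istar))) (qf (2 ^ istar) ^ Lst (2 ^ istar) * r (ts istar))"
          by (rule st)
        show "mu * mu * sig < r T1" using False lam_mu by simp
      qed
      have cgt: "prv istar < card (U t0 - U T1)"
      proof (rule ccontr)
        assume "\<not> ?thesis"
        then have "tf (prv istar) \<le> kN * (r T1 + sig)" unfolding tf_def
          by (intro FC[OF t0T1 timeok]) simp_all
        then have "tf (prv istar) / kN \<le> r T1 + sig" using kN0 by (simp add: field_simps)
        then show False using lt by simp
      qed
      define p where "p = prv istar + 1"
      have sub: "U T1 \<subseteq> U t0" by (rule U_mono[OF t0T1])
      have "card (U t0 - U T1) = card (U t0) - card (U T1)" by (rule card_Diff_subset[OF finite_subset[OF sub finU] sub])
      moreover have "card (U T1) \<le> card (U t0)" by (rule card_mono[OF finU sub])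
      ultimately have c1: "card (U T1) + p \<le> card (U t0)" using cgt by (simp add: p_def)
      have "2 ^ istar \<le> 2 * p"
      proof (cases istar)
        case 0 then show ?thesis by (simp add: p_def)
      next
        case (Suc k) then show ?thesis by (simp add: p_def prv_def)
      qed
      then have "Gf (2 ^ istar) \<le> Gf (2 * p)" by (intro Gf_mono) simp_all
      then have "2 * ln Lam * Gf (2 ^ istar) \<le> K p" using lnLam by (simp add: K_def p_def mult_left_mono)
      then have "real T1 \<le> real t0 + K p" using cost by simp
      then show ?thesis using c1 t0T1 T1M by (intro exI[of _ T1] exI[of _ p]) (simp add: p_def)
    qed
  qed
qed

lemma main_claim: "\<forall>t0. card (U t0) \<le> n \<longrightarrow> real t0 + K n \<le> real M \<longrightarrow> r M \<le> lam * sig"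
proof (induction n rule: less_induct)
  case (less n)
  show ?case
  proof (intro allI impI)
    fix t0 assume c: "card (U t0) \<le> n" and tb: "real t0 + K n \<le> real M"
    have t0M: "t0 \<le> M" using tb K_nn[of n] by simp
    show "r M \<le> lam * sig"
    proof (cases "r t0 \<le> lam * sig")
      case True then show ?thesis using r_anti[OF t0M] by simp
    next
      case False
      show ?thesis
      proof (cases "card (U t0) = 0")
        case True
        then have "U t0 = {}" using finU by simp
        then have "r t0 \<le> sig" using UB[of t0] by (simp add: PS_def)
        also have "\<dots> \<le> lam * sig" using lam sig_nn by (simp add: mult_le_cancel_right1)
        finally show ?thesis using False by simp
      next
        case nz: False
        have tb': "real t0 + K (card (U t0)) \<le> real M" using tb K_mono[OF c] by simp
        obtain t1 p where tp: "t0 \<le> t1" "t1 \<le> M" "r t1 \<le> lam * sig \<or>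
            (1 \<le> p \<and> card (U t1) + p \<le> card (U t0) \<and> real t1 \<le> real t0 + K p)"
          using phase[OF _ tb'] nz False by (metis One_nat_def Suc_leI not_le neq0_conv)
        show ?thesis
        proof (cases "r t1 \<le> lam * sig")
          case True then show ?thesis using r_anti[OF tp(2)] by simp
        next
          case False
          then have pp: "1 \<le> p" "card (U t1) + p \<le> card (U t0)" "real t1 \<le> real t0 + K p" using tp(3) by auto
          define m where "m = card (U t0) - p"
          have mn: "m < n" using pp c by (simp add: m_def)
          have "K p + K m \<le> K (p + m)" by (rule K_super)
          also have "p + m = card (U t0)" using pp by (simp add: m_def)
          finally have "real t1 + K m \<le> real t0 + K (card (U t0))" using pp(3) by simp
          then have "real t1 + K m \<le> real M" using tb' by simp
          moreover have "card (U t1) \<le> m" using pp by (simp add: m_def)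
          ultimately show ?thesis using less.IH[OF mn] by blast
        qed
      qed
    qed
  qed
qed

lemma final: "norm (f - G M f) \<le> lam * norm (f - Phi)"
proof -
  have U0: "U 0 = T" by (simp add: U_def Gam_def)
  have "K (card T) \<le> K N" using Tcard by (rule K_mono)
  then have "real 0 + K (card T) \<le> real M" using KN_M by simp
  then have "r M \<le> lam * sig" using main_claim[of "card T"] U0 by (metis order_refl)
  then show ?thesis by (simp add: r_def sig_def)
qed

end


lemma generic:
  fixes sm :: "'k::real_normed_field \<Rightarrow> 'a::real_normed_vector \<Rightarrow> 'a"
    and \<phi> :: "'i \<Rightarrow> 'a" and \<tau> :: real and G :: "nat \<Rightarrow> 'a \<Rightarrow> 'a" and N D :: nat and kN :: real
    and Q :: "real \<Rightarrow> real" and H :: "nat \<Rightarrow> real" and lam1 :: real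
  assumes nso: "normed_space_over sm" and NF: "NFprop sm"
    and hyp: "dictionary sm \<phi> \<and> 0 < \<tau> \<and> \<tau> \<le> 1 \<and> wcga sm \<phi> \<tau> G \<and>
        1 \<le> N \<and> N < D \<and> 0 < kN \<and>
        mono_on {0..} Q \<and> (\<forall>t\<ge>0. 0 \<le> Q t) \<and> (\<forall>t>0. 0 < Q t) \<and> Q 0 = 0 \<and>
        (\<forall>n\<ge>1. 0 < H n) \<and> mono_on {1..} H \<and>
        property_DQ sm \<phi> Q \<and> property_A1 sm \<phi> N kN D \<and> property_A3 sm \<phi> N H D \<and>
        1 < lam1 \<and>
        quasi_convex1 (\<lambda>n. 1 / Q ((\<tau> / 2) * (1 - 1 / sqrt lam1) / H n)) \<and>
        real N + 8 * ln (8 * (1 + lam1) * kN / (sqrt lam1 - 1))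
            * (1 / Q ((\<tau> / 2) * (1 - 1 / sqrt lam1) / H (2 * N))) < real D"
  shows "\<forall>x \<Phi>. \<Phi> \<in> SigmaN sm \<phi> N \<longrightarrow>
           norm (x - G (nat \<lfloor>8 * ln (8 * (1 + lam1) * kN / (sqrt lam1 - 1))
                          * (1 / Q ((\<tau> / 2) * (1 - 1 / sqrt lam1) / H (2 * N)))\<rfloor>) x)
             \<le> lam1 * norm (x - \<Phi>)"
proof (intro allI impI)
  fix x \<Phi> assume "\<Phi> \<in> SigmaN sm \<phi> N"
  then obtain A c where A: "finite A" "card A \<le> N" "\<Phi> = (\<Sum>i\<in>A. sm (c i) (\<phi> i))"
    unfolding SigmaN_def by blast
  have wc: "wcga sm \<phi> \<tau> G" using hyp by blast
  have G0: "G 0 x = 0" using wc unfolding wcga_def by blast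
  obtain ix where ix: "\<forall>n. (x - G n x = 0 \<longrightarrow> G (Suc n) x = x) \<and>
          (x - G n x \<noteq> 0 \<longrightarrow>
             (\<forall>F. norming sm (x - G n x) F \<longrightarrow>
                (\<forall>j. \<tau> * norm (F (\<phi> j)) \<le> norm (F (\<phi> (ix (Suc n)))))) \<and>
             G (Suc n) x \<in> kspan sm ((\<lambda>k. \<phi> (ix k)) ` {1..Suc n}) \<and>
             norm (x - G (Suc n) x) = infdist x (kspan sm ((\<lambda>k. \<phi> (ix k)) ` {1..Suc n})))"
    using wc unfolding wcga_def by blast
  have phinz: "\<forall>i. \<phi> i \<noteq> 0" using hyp unfolding dictionary_def by blast
  interpret W: wsetup sm \<phi> \<tau> G N D kN Q H lam1 x A c ix
  proof (unfold_locales)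
  qed (use nso NF phinz hyp A G0 ix in \<open>simp_all\<close>)
  have "norm (x - G W.M x) \<le> lam1 * norm (x - W.Phi)" by (rule W.final)
  moreover have "W.M = nat \<lfloor>8 * ln (8 * (1 + lam1) * kN / (sqrt lam1 - 1))
                          * (1 / Q ((\<tau> / 2) * (1 - 1 / sqrt lam1) / H (2 * N)))\<rfloor>"
    unfolding W.M_def W.phiN_eq ..
  moreover have "W.Phi = \<Phi>" by (simp add: W.Phi_def W.PS_def A(3))
  ultimately show "norm (x - G (nat \<lfloor>8 * ln (8 * (1 + lam1) * kN / (sqrt lam1 - 1))
                          * (1 / Q ((\<tau> / 2) * (1 - 1 / sqrt lam1) / H (2 * N)))\<rfloor>) x)
             \<le> lam1 * norm (x - \<Phi>)" by simp
qed

theorem theorem1p1: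
  shows "(uniformly_smooth TYPE('a::banach) \<longrightarrow>
      (\<forall>(\<phi>::'i \<Rightarrow> 'a) (\<tau>::real) (G::nat \<Rightarrow> 'a \<Rightarrow> 'a) (N::nat) (D::nat) (kN::real)
          (Q::real \<Rightarrow> real) (H::nat \<Rightarrow> real) (lam1::real).
        dictionary (scaleR :: real \<Rightarrow> 'a \<Rightarrow> 'a) \<phi> \<and> 0 < \<tau> \<and> \<tau> \<le> 1 \<and> wcga (scaleR :: real \<Rightarrow> 'a \<Rightarrow> 'a) \<phi> \<tau> G \<and>
        1 \<le> N \<and> N < D \<and> 0 < kN \<and>
        mono_on {0..} Q \<and> (\<forall>t\<ge>0. 0 \<le> Q t) \<and> (\<forall>t>0. 0 < Q t) \<and> Q 0 = 0 \<and>
        (\<forall>n\<ge>1. 0 < H n) \<and> mono_on {1..} H \<and>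
        property_DQ (scaleR :: real \<Rightarrow> 'a \<Rightarrow> 'a) \<phi> Q \<and> property_A1 (scaleR :: real \<Rightarrow> 'a \<Rightarrow> 'a) \<phi> N kN D \<and> property_A3 (scaleR :: real \<Rightarrow> 'a \<Rightarrow> 'a) \<phi> N H D \<and>
        1 < lam1 \<and>
        quasi_convex1 (\<lambda>n. 1 / Q ((\<tau> / 2) * (1 - 1 / sqrt lam1) / H n)) \<and>
        real N + 8 * ln (8 * (1 + lam1) * kN / (sqrt lam1 - 1))
            * (1 / Q ((\<tau> / 2) * (1 - 1 / sqrt lam1) / H (2 * N))) < real D
        \<longrightarrow>
        (\<forall>x \<Phi>. \<Phi> \<in> SigmaN (scaleR :: real \<Rightarrow> 'a \<Rightarrow> 'a) \<phi> N \<longrightarrow>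
           norm (x - G (nat \<lfloor>8 * ln (8 * (1 + lam1) * kN / (sqrt lam1 - 1))
                          * (1 / Q ((\<tau> / 2) * (1 - 1 / sqrt lam1) / H (2 * N)))\<rfloor>) x)
             \<le> lam1 * norm (x - \<Phi>)))
     ) \<and>
     (\<forall>sm :: complex \<Rightarrow> 'b::banach \<Rightarrow> 'b.
       normed_space_over sm \<and> uniformly_smooth TYPE('b) \<longrightarrow>
      (\<forall>(\<phi>::'j \<Rightarrow> 'b) (\<tau>::real) (G::nat \<Rightarrow> 'b \<Rightarrow> 'b) (N::nat) (D::nat) (kN::real)
          (Q::real \<Rightarrow> real) (H::nat \<Rightarrow> real) (lam1::real).
        dictionary sm \<phi> \<and> 0 < \<tau> \<and> \<tau> \<le> 1 \<and> wcga sm \<phi> \<tau> G \<and>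
        1 \<le> N \<and> N < D \<and> 0 < kN \<and>
        mono_on {0..} Q \<and> (\<forall>t\<ge>0. 0 \<le> Q t) \<and> (\<forall>t>0. 0 < Q t) \<and> Q 0 = 0 \<and>
        (\<forall>n\<ge>1. 0 < H n) \<and> mono_on {1..} H \<and>
        property_DQ sm \<phi> Q \<and> property_A1 sm \<phi> N kN D \<and> property_A3 sm \<phi> N H D \<and>
        1 < lam1 \<and>
        quasi_convex1 (\<lambda>n. 1 / Q ((\<tau> / 2) * (1 - 1 / sqrt lam1) / H n)) \<and>
        real N + 8 * ln (8 * (1 + lam1) * kN / (sqrt lam1 - 1))
            * (1 / Q ((\<tau> / 2) * (1 - 1 / sqrt lam1) / H (2 * N))) < real D
        \<longrightarrow>
        (\<forall>x \<Phi>. \<Phi> \<in> SigmaN sm \<phi> N \<longrightarrow>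
           norm (x - G (nat \<lfloor>8 * ln (8 * (1 + lam1) * kN / (sqrt lam1 - 1))
                          * (1 / Q ((\<tau> / 2) * (1 - 1 / sqrt lam1) / H (2 * N)))\<rfloor>) x)
             \<le> lam1 * norm (x - \<Phi>)))
     )"
  apply (rule conjI)
   apply (rule impI)
   apply (rule allI)+
   apply (rule impI)
   apply (rule generic[OF nso_scaleR])
    apply (erule NF_real)
   apply assumption
  apply (rule allI)
  apply (rule impI)
  apply (rule allI)+
  apply (rule impI)
  apply (rule generic)
    apply (erule conjunct1)
   apply (rule NF_complex)
    apply (erule conjunct1)
   apply (erule conjunct2)
  apply assumption
  done


end
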